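(* Let $f(z_1,z_2)$ be meromorphic in $z_1$ and holomorphic in $z_2$ near $(0,0)$, and consider the function $u\mapsto f(1/u,\log u/u)$ on a left half-plane $\{\mathrm{Re}\,u<-L\}$, $L\gg0$ (with a fixed branch of $\log u$). Let $a_1,\dots,a_k$ be nonzero real numbers. Then: (1) for any $A\in\mathbb{R}$ there exists $p\in\mathcal{P}(u)$ such that $|f-p|\le M|u|^{-A}$ for some constant $M$; (2) $\mathcal{P}(u)$ is closed under integration: for any $p\in\mathcal{P}(u)$ there is $P\in\mathcal{P}(u)$ with $P'=p$; (3) for any $A\in\mathbb{R}$ there exists $P_f\in\mathcal{P}(u)$ such that $|f-\Delta_{a_1,\dots,a_k}P_f|\le M|u|^{-A}$ for some constant $M$.
   Context: $\mathcal{P}(u)=\mathbb{C}[u,\tfrac1u,\log u]$ is the space of polynomials in $\log u$ with coefficients Laurent polynomials in $u$. The difference operator is $\Delta_af(u)=f(u+ia\pi)-f(u-ia\pi)$ and $\Delta_{a_1,\dots,a_k}=\Delta_{a_1}\circ\cdots\circ\Delta_{a_k}$. Estimates are understood on the half-plane $\{\mathrm{Re}\,u<-L\}$. *)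

theory Defs
  imports "HOL-Analysis.Analysis"
begin

definition holomorphic2_on :: "(complex \<times> complex \<Rightarrow> complex) \<Rightarrow> (complex \<times> complex) set \<Rightarrow> bool" where
  "holomorphic2_on g U \<longleftrightarrow>
     (\<forall>z\<in>U. \<exists>D. (g has_derivative D) (at z) \<and>
        (\<forall>(c::complex) w. D (c * fst w, c * snd w) = c * D w))"

text \<open>The space P(u) = C[u, 1/u, log u], where log u is given by the branch lg:
  finite sums of c * u^n * (log u)^j with n an integer and j a natural number.\<close>
definition Pspace :: "(complex \<Rightarrow> complex) \<Rightarrow> (complex \<Rightarrow> complex) set" where
  "Pspace lg = {p. \<exists>(S::(int \<times> nat) set) c. finite S \<and>
      (\<forall>u. p u = (\<Sum>(n,j)\<in>S. c (n,j) * u powi n * (lg u) ^ j))}"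

definition Delta :: "real \<Rightarrow> (complex \<Rightarrow> complex) \<Rightarrow> complex \<Rightarrow> complex" where
  "Delta a F u = F (u + \<i> * of_real (a * pi)) - F (u - \<i> * of_real (a * pi))"

fun Delta_list :: "real list \<Rightarrow> (complex \<Rightarrow> complex) \<Rightarrow> complex \<Rightarrow> complex" where
  "Delta_list [] F = F"
| "Delta_list (a # as) F = Delta a (Delta_list as F)"

end

theory Submission
  imports Defs "HOL-Complex_Analysis.Complex_Analysis"
begin


definition tr :: "(complex \<Rightarrow> complex) \<Rightarrow> (int \<times> nat) set \<Rightarrow> (int \<times> nat \<Rightarrow> complex) \<Rightarrow> complex \<Rightarrow> complex" where
  "tr l S c u = (\<Sum>x\<in>S. c x * u powi fst x * l u ^ snd x)"

definition PP :: "(complex \<Rightarrow> complex) \<Rightarrow> int \<Rightarrow> (complex \<Rightarrow> complex) set" where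
  "PP l n = {p. \<exists>S c. finite S \<and> (\<forall>x\<in>S. fst x \<le> n) \<and> p = tr l S c}"

lemma Pspace_iff: "p \<in> Pspace l \<longleftrightarrow> (\<exists>n. p \<in> PP l n)"
proof
  assume "p \<in> Pspace l"
  then obtain S c where S: "finite S" and p: "\<forall>u. p u = (\<Sum>(n,j)\<in>S. c (n,j) * u powi n * (l u) ^ j)"
    unfolding Pspace_def by blast
  have "p = tr l S c" using p by (auto simp: tr_def case_prod_beta)
  moreover have "\<forall>x\<in>S. fst x \<le> Max (insert 0 (fst ` S))" using S by auto
  ultimately show "\<exists>n. p \<in> PP l n" using S unfolding PP_def by blast
next
  assume "\<exists>n. p \<in> PP l n"
  then obtain S c where "finite S" "p = tr l S c" unfolding PP_def by blast
  then show "p \<in> Pspace l" unfolding Pspace_def by (auto simp: tr_def case_prod_beta)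
qed

lemma PP_Pspace: "p \<in> PP l n \<Longrightarrow> p \<in> Pspace l"
  using Pspace_iff by blast

lemma PP_zero: "(\<lambda>u. 0) \<in> PP l n"
  unfolding PP_def by (rule CollectI, rule exI[of _ "{}"], rule exI[of _ "\<lambda>_. 0"], auto simp: tr_def)

lemma PP_mono: "n \<le> n' \<Longrightarrow> p \<in> PP l n \<Longrightarrow> p \<in> PP l n'"
  unfolding PP_def by force

lemma PP_mon: "k \<le> n \<Longrightarrow> (\<lambda>u. a * u powi k * l u ^ j) \<in> PP l n"
  unfolding PP_def
  by (rule CollectI, rule exI[of _ "{(k,j)}"], rule exI[of _ "\<lambda>_. a"], auto simp: tr_def)

lemma PP_add:
  assumes "p \<in> PP l n" "q \<in> PP l n"
  shows "(\<lambda>u. p u + q u) \<in> PP l n"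
proof -
  obtain S1 c1 where S1: "finite S1" "\<forall>x\<in>S1. fst x \<le> n" "p = tr l S1 c1"
    using assms(1) unfolding PP_def by blast
  obtain S2 c2 where S2: "finite S2" "\<forall>x\<in>S2. fst x \<le> n" "q = tr l S2 c2"
    using assms(2) unfolding PP_def by blast
  define c where "c x = (if x \<in> S1 then c1 x else 0) + (if x \<in> S2 then c2 x else 0)" for x
  have "(\<lambda>u. p u + q u) = tr l (S1 \<union> S2) c"
  proof
    fix u
    define m where "m x = u powi fst x * l u ^ snd x" for x
    have e1: "(\<Sum>x\<in>S1\<union>S2. (if x \<in> S1 then c1 x else 0) * m x) = (\<Sum>x\<in>S1. c1 x * m x)"
      by (rule sum.mono_neutral_cong_right) (use S1 S2 in auto)
    have e2: "(\<Sum>x\<in>S1\<union>S2. (if x \<in> S2 then c2 x else 0) * m x) = (\<Sum>x\<in>S2. c2 x * m x)"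
      by (rule sum.mono_neutral_cong_right) (use S1 S2 in auto)
    have "tr l (S1 \<union> S2) c u = (\<Sum>x\<in>S1\<union>S2. (if x \<in> S1 then c1 x else 0) * m x + (if x \<in> S2 then c2 x else 0) * m x)"
      unfolding tr_def c_def m_def by (rule sum.cong) (auto simp: algebra_simps)
    also have "\<dots> = p u + q u" unfolding sum.distrib e1 e2 using S1 S2
      by (simp add: tr_def m_def mult.assoc)
    finally show "p u + q u = tr l (S1 \<union> S2) c u" by simp
  qed
  then show ?thesis unfolding PP_def using S1 S2 by blast
qed

lemma PP_scale:
  assumes "p \<in> PP l n"
  shows "(\<lambda>u. a * p u) \<in> PP l n"
proof -
  obtain S c where S: "finite S" "\<forall>x\<in>S. fst x \<le> n" "p = tr l S c"
    using assms unfolding PP_def by blast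
  have "(\<lambda>u. a * p u) = tr l S (\<lambda>x. a * c x)"
    by (auto simp: S(3) tr_def sum_distrib_left algebra_simps)
  then show ?thesis unfolding PP_def using S by blast
qed

lemma PP_sum:
  assumes "finite I" "\<And>i. i \<in> I \<Longrightarrow> f i \<in> PP l n"
  shows "(\<lambda>u. \<Sum>i\<in>I. f i u) \<in> PP l n"
  using assms
proof (induction I rule: finite_induct)
  case empty then show ?case by (simp add: PP_zero)
next
  case (insert x F)
  then show ?case using PP_add[of "f x" l n "\<lambda>u. \<Sum>i\<in>F. f i u"] by simp
qed

lemma PP_diff:
  assumes "p \<in> PP l n" "q \<in> PP l n"
  shows "(\<lambda>u. p u - q u) \<in> PP l n"
  using PP_add[OF assms(1) PP_scale[OF assms(2), of "-1"]] by simp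

lemma PP_transfer:
  assumes "p \<in> PP l n"
  shows "\<exists>p'\<in>PP l' n. \<forall>u. l u = l' u \<longrightarrow> p u = p' u"
proof -
  obtain S c where S: "finite S" "\<forall>x\<in>S. fst x \<le> n" "p = tr l S c"
    using assms unfolding PP_def by blast
  show ?thesis
    by (rule bexI[of _ "tr l' S c"]) (use S in \<open>auto simp: PP_def tr_def\<close>)
qed



definition S0 :: "complex set" where "S0 = - \<real>\<^sub>\<ge>\<^sub>0"

definition lgx :: "complex \<Rightarrow> complex \<Rightarrow> complex" where "lgx c0 u = Ln (- u) + c0"

lemma open_S0: "open S0" unfolding S0_def by (simp add: open_Compl)

lemma S0_iff: "u \<in> S0 \<longleftrightarrow> \<not> (Re u \<ge> 0 \<and> Im u = 0)"
  unfolding S0_def by (simp add: complex_nonneg_Reals_iff)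

lemma S0_nz: "u \<in> S0 \<Longrightarrow> u \<noteq> 0" by (auto simp: S0_iff)

lemma S0_half: "Re u < 0 \<Longrightarrow> u \<in> S0" by (auto simp: S0_iff)

lemma ball_S0:
  assumes "Re u \<le> 0" "u \<noteq> 0"
  shows "ball u (norm u) \<subseteq> S0"
proof
  fix w assume w: "w \<in> ball u (norm u)"
  show "w \<in> S0"
  proof (rule ccontr)
    assume "w \<notin> S0"
    then have "Re w \<ge> 0" "Im w = 0" by (auto simp: S0_iff)
    have e1: "(norm (u-w))^2 = (Re u - Re w)^2 + (Im u)^2" using \<open>Im w = 0\<close> by (simp add: cmod_power2)
    have e2: "(norm u)^2 = (Re u)^2 + (Im u)^2" by (simp add: cmod_power2)
    have "Re u * Re w \<le> 0" using assms(1) \<open>Re w \<ge> 0\<close> by (simp add: mult_nonpos_nonneg)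
    then have "(norm (u - w))^2 \<ge> (norm u)^2"
    proof -
      have "(Re u - Re w)^2 = (Re u)^2 - 2 * (Re u * Re w) + (Re w)^2" by (simp add: power2_diff)
      moreover have "(Re w)^2 \<ge> 0" by simp
      ultimately have "(Re u - Re w)^2 \<ge> (Re u)^2" using \<open>Re u * Re w \<le> 0\<close> by linarith
      then show ?thesis unfolding e1 e2 by linarith
    qed
    then have "norm (u - w) \<ge> norm u" by (simp add: power2_le_iff_abs_le abs_le_square_iff)
    with w show False by (simp add: dist_norm)
  qed
qed

lemma lgx_deriv:
  assumes "u \<in> S0"
  shows "(lgx c0 has_field_derivative inverse u) (at u)"
proof -
  have nn: "- u \<notin> \<real>\<^sub>\<le>\<^sub>0" using assms by (auto simp: S0_iff complex_nonpos_Reals_iff)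
  have "((\<lambda>u. Ln (- u)) has_field_derivative inverse (- u) * (- 1)) (at u)"
    by (rule DERIV_chain2[where g="\<lambda>u. - u", OF has_field_derivative_Ln[OF nn]]) (auto intro!: derivative_eq_intros)
  then have "((\<lambda>u. Ln (- u) + c0) has_field_derivative inverse (- u) * (- 1) + 0) (at u)"
    by (rule DERIV_add[OF _ DERIV_const])
  then show ?thesis unfolding lgx_def
    by (simp add: inverse_minus_eq)
qed

lemma mon_deriv:
  assumes "u \<in> S0"
  shows "((\<lambda>u. u powi k * lgx c0 u ^ j) has_field_derivative
     (of_int k * u powi (k-1) * lgx c0 u ^ j + of_nat j * u powi (k-1) * lgx c0 u ^ (j-1))) (at u)"
proof -
  have nz: "u \<noteq> 0" using S0_nz[OF assms] .
  have "((\<lambda>u. u powi k * lgx c0 u ^ j) has_field_derivative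
     (of_int k * u powi (k-1) * 1 * lgx c0 u ^ j + u powi k * (of_nat j * lgx c0 u ^ (j-1) * inverse u))) (at u)"
  proof -
    have d1: "((\<lambda>u. u powi k) has_field_derivative of_int k * u powi (k-1) * 1) (at u)"
      by (intro derivative_eq_intros) (auto simp: nz)
    have d2: "((\<lambda>u. lgx c0 u ^ j) has_field_derivative of_nat j * lgx c0 u ^ (j-1) * inverse u) (at u)"
      using DERIV_power[OF lgx_deriv[OF assms, of c0], of j] by (simp add: mult_ac)
    show ?thesis using DERIV_mult[OF d1 d2] by (simp add: ac_simps)
  qed
  moreover have e: "u powi k * inverse u = u powi (k-1)"
    using nz by (simp add: power_int_diff field_simps)
  moreover have "u powi k * (of_nat j * lgx c0 u ^ (j-1) * inverse u) = of_nat j * (u powi k * inverse u) * lgx c0 u ^ (j-1)"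
    by (simp only: ac_simps)
  ultimately show ?thesis by (simp only: e mult_1_right)
qed



lemma PP_deriv:
  assumes "p \<in> PP (lgx c0) n"
  shows "\<exists>q\<in>PP (lgx c0) (n-1). \<forall>u\<in>S0. (p has_field_derivative q u) (at u)"
proof -
  let ?L = "lgx c0"
  obtain S c where S: "finite S" "\<forall>x\<in>S. fst x \<le> n" "p = tr ?L S c"
    using assms unfolding PP_def by blast
  define q where "q u = (\<Sum>x\<in>S. c x * (of_int (fst x) * u powi (fst x - 1) * ?L u ^ snd x
        + of_nat (snd x) * u powi (fst x - 1) * ?L u ^ (snd x - 1)))" for u
  have "q \<in> PP ?L (n-1)"
  proof -
    have H: "(\<lambda>u. c x * (of_int (fst x) * u powi (fst x - 1) * ?L u ^ snd x
        + of_nat (snd x) * u powi (fst x - 1) * ?L u ^ (snd x - 1))) \<in> PP ?L (n-1)" if "x \<in> S" for x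
    proof -
      have k: "fst x - 1 \<le> n - 1" using S(2) that by auto
      have "(\<lambda>u. (c x * of_int (fst x)) * u powi (fst x - 1) * ?L u ^ snd x
        + (c x * of_nat (snd x)) * u powi (fst x - 1) * ?L u ^ (snd x - 1)) \<in> PP ?L (n-1)"
        by (rule PP_add; rule PP_mon[OF k])
      then show ?thesis by (simp add: algebra_simps)
    qed
    show ?thesis unfolding q_def by (rule PP_sum[OF S(1)], rule H)
  qed
  moreover have "(p has_field_derivative q u) (at u)" if u: "u \<in> S0" for u
  proof -
    have "((\<lambda>u. \<Sum>x\<in>S. c x * (u powi fst x * ?L u ^ snd x)) has_field_derivative q u) (at u)"
      unfolding q_def
      by (rule DERIV_sum, rule DERIV_cmult, rule mon_deriv[OF u])
    moreover have "p = (\<lambda>u. \<Sum>x\<in>S. c x * (u powi fst x * ?L u ^ snd x))"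
      using S(3) by (auto simp: tr_def mult.assoc)
    ultimately show ?thesis by simp
  qed
  ultimately show ?thesis by blast
qed

lemma PP_holo:
  assumes "p \<in> PP (lgx c0) n"
  shows "p holomorphic_on S0"
  using PP_deriv[OF assms] open_S0 by (auto simp: holomorphic_on_open)

lemma PP_higher:
  assumes "p \<in> PP (lgx c0) n"
  shows "\<exists>q\<in>PP (lgx c0) (n - int k). \<forall>u\<in>S0. (deriv ^^ k) p u = q u"
proof (induction k)
  case 0
  then show ?case using assms by auto
next
  case (Suc k)
  then obtain q where q: "q \<in> PP (lgx c0) (n - int k)" "\<forall>u\<in>S0. (deriv ^^ k) p u = q u" by blast
  obtain q' where q': "q' \<in> PP (lgx c0) (n - int k - 1)" "\<forall>u\<in>S0. (q has_field_derivative q' u) (at u)"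
    using PP_deriv[OF q(1)] by blast
  have "(deriv ^^ Suc k) p u = q' u" if u: "u \<in> S0" for u
  proof -
    have ev: "eventually (\<lambda>x. (deriv ^^ k) p x = q x) (nhds u)"
      using q(2) open_S0 u by (auto simp: eventually_nhds)
    have "(deriv ^^ Suc k) p u = deriv ((deriv ^^ k) p) u" by simp
    also have "\<dots> = deriv q u" by (rule deriv_cong_ev[OF ev refl])
    also have "\<dots> = q' u" using q'(2) u DERIV_imp_deriv by blast
    finally show ?thesis .
  qed
  moreover have "n - int k - 1 = n - int (Suc k)" by simp
  ultimately show ?case using q'(1) by metis
qed

lemma anti_m1:
  assumes "u \<in> S0"
  shows "((\<lambda>u. (1 / of_nat (Suc j)) * u powi 0 * lgx c0 u ^ Suc j) has_field_derivative u powi (-1) * lgx c0 u ^ j) (at u)"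
proof -
  have "((\<lambda>u. (1 / of_nat (Suc j)) * (u powi 0 * lgx c0 u ^ Suc j)) has_field_derivative
     (1 / of_nat (Suc j)) * (of_int 0 * u powi (0-1) * lgx c0 u ^ Suc j + of_nat (Suc j) * u powi (0-1) * lgx c0 u ^ (Suc j - 1))) (at u)"
    by (rule DERIV_cmult, rule mon_deriv[OF assms])
  then show ?thesis by (simp add: mult.assoc del: of_nat_Suc)
qed

lemma anti_ne:
  assumes "k \<noteq> -1"
  shows "\<exists>Q\<in>PP (lgx c0) (k+1). \<forall>u\<in>S0. (Q has_field_derivative u powi k * lgx c0 u ^ j) (at u)"
proof (induction j)
  have nz: "(of_int (k+1) :: complex) \<noteq> 0" proof -
    have "k + 1 \<noteq> 0" using assms by simp
    then show ?thesis by (metis of_int_eq_0_iff)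
  qed
  case 0
  have "((\<lambda>u. (1 / of_int (k+1)) * (u powi (k+1) * lgx c0 u ^ 0)) has_field_derivative
     (1 / of_int (k+1)) * (of_int (k+1) * u powi (k+1-1) * lgx c0 u ^ 0 + of_nat 0 * u powi (k+1-1) * lgx c0 u ^ (0 - 1))) (at u)"
    if "u \<in> S0" for u
    by (rule DERIV_cmult, rule mon_deriv[OF that])
  then have "\<forall>u\<in>S0. ((\<lambda>u. (1 / of_int (k+1)) * u powi (k+1) * lgx c0 u ^ 0) has_field_derivative u powi k * lgx c0 u ^ 0) (at u)"
    using nz by (simp add: mult.assoc)
  moreover have "(\<lambda>u. (1 / of_int (k+1)) * u powi (k+1) * lgx c0 u ^ 0) \<in> PP (lgx c0) (k+1)"
    by (rule PP_mon) simp
  ultimately show ?case by blast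
next
  have nz: "(of_int (k+1) :: complex) \<noteq> 0" proof -
    have "k + 1 \<noteq> 0" using assms by simp
    then show ?thesis by (metis of_int_eq_0_iff)
  qed
  case (Suc j)
  then obtain Q where Q: "Q \<in> PP (lgx c0) (k+1)" "\<forall>u\<in>S0. (Q has_field_derivative u powi k * lgx c0 u ^ j) (at u)"
    by blast
  define R where "R u = (1 / of_int (k+1)) * u powi (k+1) * lgx c0 u ^ Suc j - (of_nat (Suc j) / of_int (k+1)) * Q u" for u
  have "R \<in> PP (lgx c0) (k+1)" unfolding R_def
    by (rule PP_diff, rule PP_mon, simp, rule PP_scale, rule Q(1))
  moreover have "(R has_field_derivative u powi k * lgx c0 u ^ Suc j) (at u)" if u: "u \<in> S0" for u
  proof -
    have d1: "((\<lambda>u. (1 / of_int (k+1)) * (u powi (k+1) * lgx c0 u ^ Suc j)) has_field_derivative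
     (1 / of_int (k+1)) * (of_int (k+1) * u powi (k+1-1) * lgx c0 u ^ Suc j + of_nat (Suc j) * u powi (k+1-1) * lgx c0 u ^ (Suc j - 1))) (at u)"
      by (rule DERIV_cmult, rule mon_deriv[OF u])
    have d2: "((\<lambda>u. (of_nat (Suc j) / of_int (k+1)) * Q u) has_field_derivative
        (of_nat (Suc j) / of_int (k+1)) * (u powi k * lgx c0 u ^ j)) (at u)"
      by (rule DERIV_cmult, rule Q(2)[rule_format, OF u])
    have "(R has_field_derivative (1 / of_int (k+1)) * (of_int (k+1) * u powi (k+1-1) * lgx c0 u ^ Suc j + of_nat (Suc j) * u powi (k+1-1) * lgx c0 u ^ (Suc j - 1))
       - (of_nat (Suc j) / of_int (k+1)) * (u powi k * lgx c0 u ^ j)) (at u)"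
      unfolding R_def using DERIV_diff[OF d1 d2] by (simp add: mult.assoc)
    moreover have "(1 / of_int (k+1)) * (of_int (k+1) * u powi (k+1-1) * lgx c0 u ^ Suc j + of_nat (Suc j) * u powi (k+1-1) * lgx c0 u ^ (Suc j - 1))
       - (of_nat (Suc j) / of_int (k+1)) * (u powi k * lgx c0 u ^ j) = u powi k * lgx c0 u ^ Suc j"
    proof -
      have aux: "(1/K) * (K * x + s * y) - (s/K) * y = x" if "K \<noteq> 0" for K x s y :: complex
        using that by (simp add: field_simps)
      have e: "k + 1 - 1 = k" "Suc j - 1 = j" by auto
      show ?thesis unfolding e mult.assoc[of "of_int (k+1)"] mult.assoc[of "of_nat (Suc j)"]
        by (rule aux[OF nz])
    qed
    ultimately show ?thesis by simp
  qed
  ultimately show ?case by blast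
qed

lemma mon_anti:
  "\<exists>Q\<in>PP (lgx c0) (k+1). \<forall>u\<in>S0. (Q has_field_derivative u powi k * lgx c0 u ^ j) (at u)"
proof (cases "k = -1")
  case True
  have "(\<lambda>u. (1 / of_nat (Suc j)) * u powi 0 * lgx c0 u ^ Suc j) \<in> PP (lgx c0) (k+1)"
    by (rule PP_mon) (simp add: True)
  then show ?thesis using anti_m1 True by blast
qed (rule anti_ne)

lemma PP_anti:
  assumes "p \<in> PP (lgx c0) n"
  shows "\<exists>Q\<in>PP (lgx c0) (n+1). \<forall>u\<in>S0. (Q has_field_derivative p u) (at u)"
proof -
  let ?L = "lgx c0"
  obtain S c where S: "finite S" "\<forall>x\<in>S. fst x \<le> n" "p = tr ?L S c"
    using assms unfolding PP_def by blast
  have "\<forall>x\<in>S. \<exists>Q. Q \<in> PP ?L (n+1) \<and> (\<forall>u\<in>S0. (Q has_field_derivative u powi fst x * ?L u ^ snd x) (at u))"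
  proof
    fix x assume x: "x \<in> S"
    obtain Q where "Q\<in>PP ?L (fst x+1)" "\<forall>u\<in>S0. (Q has_field_derivative u powi fst x * ?L u ^ snd x) (at u)"
      using mon_anti by blast
    moreover have "fst x + 1 \<le> n + 1" using S(2) x by auto
    ultimately show "\<exists>Q. Q \<in> PP ?L (n+1) \<and> (\<forall>u\<in>S0. (Q has_field_derivative u powi fst x * ?L u ^ snd x) (at u))"
      using PP_mono by blast
  qed
  then obtain F where F: "\<forall>x\<in>S. F x \<in> PP ?L (n+1) \<and> (\<forall>u\<in>S0. (F x has_field_derivative u powi fst x * ?L u ^ snd x) (at u))"
    by (metis (no_types, lifting) bchoice)
  define Q where "Q u = (\<Sum>x\<in>S. c x * F x u)" for u
  have "Q \<in> PP ?L (n+1)" unfolding Q_def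
    by (rule PP_sum[OF S(1)], rule PP_scale) (use F in blast)
  moreover have "(Q has_field_derivative p u) (at u)" if u: "u \<in> S0" for u
  proof -
    have "(Q has_field_derivative (\<Sum>x\<in>S. c x * (u powi fst x * ?L u ^ snd x))) (at u)"
      unfolding Q_def by (rule DERIV_sum, rule DERIV_cmult) (use F u in blast)
    moreover have "p u = (\<Sum>x\<in>S. c x * (u powi fst x * ?L u ^ snd x))"
      using S(3) by (auto simp: tr_def mult.assoc)
    ultimately show ?thesis by simp
  qed
  ultimately show ?thesis by blast
qed



lemma lgx_bound:
  assumes "u \<in> S0"
  shows "norm (lgx c0 u) \<le> \<bar>ln (norm u)\<bar> + pi + norm c0"
proof -
  have nz: "- u \<noteq> 0" using S0_nz[OF assms] by simp
  have "norm (Ln (- u)) \<le> \<bar>Re (Ln (-u))\<bar> + \<bar>Im (Ln (-u))\<bar>" by (rule cmod_le)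
  also have "\<dots> \<le> \<bar>ln (norm u)\<bar> + pi"
    using mpi_less_Im_Ln[OF nz] Im_Ln_le_pi[OF nz] Re_Ln[OF nz] by auto
  finally show ?thesis unfolding lgx_def using norm_triangle_ineq[of "Ln (-u)" c0] by linarith
qed

lemma log_pow_bound:
  assumes "K \<ge> 0"
  shows "\<exists>C\<ge>0. \<forall>x::real. x \<ge> 1 \<longrightarrow> (ln x + K) ^ j \<le> C * x powr (1/2)"
proof (cases "j = 0")
  case True
  then show ?thesis by (intro exI[of _ 1]) (auto intro: ge_one_powr_ge_zero)
next
  case False
  define e where "e = 1 / (2 * real j)"
  have e: "e > 0" using False by (simp add: e_def)
  show ?thesis
  proof (intro exI[of _ "(2 * real j + K) ^ j"] conjI allI impI)
    show "0 \<le> (2 * real j + K) ^ j" using assms by simp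
    fix x :: real assume x: "x \<ge> 1"
    have "ln (x powr e) \<le> x powr e - 1" by (rule ln_le_minus_one) (use x in simp)
    then have "e * ln x \<le> x powr e" using x by (simp add: ln_powr)
    then have "ln x \<le> 2 * real j * x powr e" using False by (simp add: e_def field_simps)
    moreover have "1 \<le> x powr e" using x e by (simp add: ge_one_powr_ge_zero)
    ultimately have "ln x + K \<le> (2 * real j + K) * x powr e" using assms
      by (simp add: algebra_simps) (smt (verit, ccfv_SIG) mult_le_cancel_left1)
    moreover have "0 \<le> ln x + K" using x assms by simp
    ultimately have "(ln x + K) ^ j \<le> ((2 * real j + K) * x powr e) ^ j"
      by (rule power_mono)
    also have "\<dots> = (2 * real j + K) ^ j * x powr (1/2)"
      using False x by (simp add: power_mult_distrib e_def powr_realpow[symmetric] powr_powr)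
    finally show "(ln x + K) ^ j \<le> (2 * real j + K) ^ j * x powr (1/2)" .
  qed
qed

lemma PP_bound:
  assumes "p \<in> PP (lgx c0) n"
  shows "\<exists>C\<ge>0. \<forall>u\<in>S0. norm u \<ge> 1 \<longrightarrow> norm (p u) \<le> C * norm u powr (real_of_int n + 1/2)"
proof -
  let ?L = "lgx c0"
  define K where "K = pi + norm c0"
  have K: "K \<ge> 0" unfolding K_def using pi_gt_zero by (smt (verit) norm_ge_zero)
  obtain S c where S: "finite S" "\<forall>x\<in>S. fst x \<le> n" "p = tr ?L S c"
    using assms unfolding PP_def by blast
  have "\<forall>j. \<exists>C\<ge>0. \<forall>x::real. x \<ge> 1 \<longrightarrow> (ln x + K) ^ j \<le> C * x powr (1/2)"
    using log_pow_bound[OF K] by blast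
  then obtain Cf where Cf: "\<And>j. Cf j \<ge> 0" "\<And>j x. x \<ge> 1 \<Longrightarrow> (ln x + K) ^ j \<le> Cf j * x powr (1/2)"
    by metis
  define C where "C = (\<Sum>x\<in>S. norm (c x) * Cf (snd x))"
  show ?thesis
  proof (intro exI[of _ C] conjI ballI impI)
    show "0 \<le> C" unfolding C_def by (intro sum_nonneg mult_nonneg_nonneg) (auto simp: Cf)
    fix u assume u: "u \<in> S0" "1 \<le> norm u"
    have tm: "norm (c x * u powi fst x * ?L u ^ snd x) \<le> norm (c x) * Cf (snd x) * norm u powr (real_of_int n + 1/2)"
      if x: "x \<in> S" for x
    proof -
      have "norm (u powi fst x) = norm u powr real_of_int (fst x)"
        using u powr_real_of_int'[of "norm u" "fst x"] S0_nz[OF u(1)] by (simp add: norm_power_int)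
      also have "\<dots> \<le> norm u powr real_of_int n" using S(2) x u by (intro powr_mono) auto
      finally have a: "norm (u powi fst x) \<le> norm u powr real_of_int n" .
      have "norm (?L u) \<le> ln (norm u) + K"
        using lgx_bound[OF u(1), of c0] u(2) by (simp add: K_def)
      then have "norm (?L u) ^ snd x \<le> (ln (norm u) + K) ^ snd x"
        by (intro power_mono) auto
      also have "\<dots> \<le> Cf (snd x) * norm u powr (1/2)" using Cf(2) u(2) by blast
      finally have b: "norm (?L u ^ snd x) \<le> Cf (snd x) * norm u powr (1/2)" by (simp add: norm_power)
      have "norm (c x * u powi fst x * ?L u ^ snd x) = norm (c x) * norm (u powi fst x) * norm (?L u ^ snd x)"
        by (simp add: norm_mult)
      also have "\<dots> \<le> norm (c x) * norm u powr real_of_int n * (Cf (snd x) * norm u powr (1/2))"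
        by (intro mult_mono a b mult_left_mono) (auto simp: Cf)
      also have "\<dots> = norm (c x) * Cf (snd x) * norm u powr (real_of_int n + 1/2)"
        using u by (simp add: powr_add)
      finally show ?thesis .
    qed
    have "norm (p u) \<le> (\<Sum>x\<in>S. norm (c x * u powi fst x * ?L u ^ snd x))"
      unfolding S(3) tr_def by (rule norm_sum)
    also have "\<dots> \<le> (\<Sum>x\<in>S. norm (c x) * Cf (snd x) * norm u powr (real_of_int n + 1/2))"
      by (rule sum_mono, rule tm)
    also have "\<dots> = C * norm u powr (real_of_int n + 1/2)"
      unfolding C_def by (simp add: sum_distrib_right)
    finally show "norm (p u) \<le> C * norm u powr (real_of_int n + 1/2)" .
  qed
qed



lemma taylor_rem:
  fixes F :: "complex \<Rightarrow> complex"
  assumes holo: "F holomorphic_on ball z R" and r: "0 < r" "r < R"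
    and B: "\<And>w. norm (w - z) = r \<Longrightarrow> norm (F w) \<le> B"
    and x: "norm (x - z) \<le> r / 2"
  shows "norm (F x - (\<Sum>k<K. (deriv ^^ k) F z / fact k * (x - z) ^ k)) \<le> 2 * B * (norm (x - z) / r) ^ K"
proof -
  define a where "a k = (deriv ^^ k) F z / fact k * (x - z) ^ k" for k
  define q where "q = norm (x - z) / r"
  have q: "0 \<le> q" "q \<le> 1/2" using x r by (auto simp: q_def field_simps)
  have xin: "x \<in> ball z R" using x r by (auto simp: dist_norm norm_minus_commute)
  have sums: "a sums F x" unfolding a_def by (rule holomorphic_power_series[OF holo xin])
  have sh: "(\<lambda>i. a (i + K)) sums (F x - (\<Sum>k<K. a k))"
    using sums_iff_shift'[of a K "F x"] sums by simp
  have holr: "F holomorphic_on ball z r" using holomorphic_on_subset[OF holo] r by (simp add: subset_ball)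
  have contr: "continuous_on (cball z r) F"
  proof (rule continuous_on_subset[OF holomorphic_on_imp_continuous_on[OF holo]])
    show "cball z r \<subseteq> ball z R" using r by (auto simp: subset_iff)
  qed
  have B0: "0 \<le> B"
  proof -
    have "norm ((z + of_real r) - z) = r" using r by simp
    then show ?thesis using B[of "z + of_real r"] norm_ge_zero[of "F (z + of_real r)"] by linarith
  qed
  have ak: "norm (a k) \<le> B * q ^ k" for k
  proof -
    have "norm ((deriv ^^ k) F z) \<le> fact k * B / r ^ k"
      by (rule Cauchy_inequality[OF holr contr r(1)]) (use B in \<open>auto simp: norm_minus_commute\<close>)
    have "norm (a k) = norm ((deriv ^^ k) F z) / fact k * norm (x - z) ^ k"
      unfolding a_def by (simp add: norm_mult norm_divide norm_power)
    also have "\<dots> \<le> fact k * B / r ^ k / fact k * norm (x - z) ^ k"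
      by (intro mult_right_mono divide_right_mono) (use \<open>norm ((deriv ^^ k) F z) \<le> fact k * B / r ^ k\<close> in auto)
    also have "\<dots> = B * q ^ k" using r by (simp add: q_def power_divide)
    finally show ?thesis .
  qed
  have gs: "(\<lambda>i. B * q ^ K * q ^ i) sums (B * q ^ K * (1 / (1 - q)))"
    by (rule sums_mult, rule geometric_sums) (use q in auto)
  have "norm (F x - (\<Sum>k<K. a k)) = norm (\<Sum>i. a (i + K))" using sums_unique[OF sh] by simp
  also have "\<dots> \<le> (\<Sum>i. B * q ^ K * q ^ i)"
  proof (rule norm_suminf_le)
    show "norm (a (n + K)) \<le> B * q ^ K * q ^ n" for n
      using ak[of "n+K"] by (simp add: power_add mult.assoc mult.commute[of "q^n"])
    show "summable (\<lambda>i. B * q ^ K * q ^ i)" using gs by (rule sums_summable)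
  qed
  also have "\<dots> = B * q ^ K * (1 / (1 - q))" using sums_unique[OF gs] by simp
  also have "\<dots> \<le> B * q ^ K * 2"
    by (intro mult_left_mono) (use q B0 in \<open>auto simp: field_simps\<close>)
  finally show ?thesis unfolding a_def q_def by (simp add: mult_ac)
qed



lemma Pspace_add:
  assumes "p \<in> Pspace l" "q \<in> Pspace l"
  shows "(\<lambda>u. p u + q u) \<in> Pspace l"
proof -
  obtain n1 n2 where "p \<in> PP l n1" "q \<in> PP l n2" using assms Pspace_iff by blast
  then have "p \<in> PP l (max n1 n2)" "q \<in> PP l (max n1 n2)" using PP_mono[of n1 "max n1 n2"] PP_mono[of n2 "max n1 n2"] by auto
  then show ?thesis using PP_add Pspace_iff by blast
qed

lemma ratio_powr:
  fixes x y e :: real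
  assumes "x / 2 \<le> y" "y \<le> 2 * x" "0 < x"
  shows "y powr e \<le> 2 powr \<bar>e\<bar> * x powr e"
proof -
  have y: "0 < y" using assms by simp
  have "y powr e = (y / x) powr e * x powr e" using assms y by (simp add: powr_divide)
  moreover have "(y / x) powr e \<le> 2 powr \<bar>e\<bar>"
  proof (cases "e \<ge> 0")
    case True
    have "(y / x) powr e \<le> 2 powr e" using assms True by (intro powr_mono2) (auto simp: field_simps)
    then show ?thesis using True by simp
  next
    case False
    have "(y / x) powr e = (x / y) powr (- e)" using assms y by (simp add: powr_minus_divide powr_divide)
    also have "\<dots> \<le> 2 powr (- e)" using assms False y by (intro powr_mono2) (auto simp: field_simps)
    finally show ?thesis using False by simp
  qed
  ultimately show ?thesis by (simp add: mult_right_mono)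
qed

lemma inv_base:
  assumes "real_of_int n + 1/2 \<le> - A" "R \<ge> 1"
  shows "\<forall>q\<in>PP (lgx c0) n. \<exists>Q\<in>Pspace (lgx c0). \<exists>M. \<forall>u. Re u < 0 \<longrightarrow> R \<le> norm u \<longrightarrow>
           norm (q u - Delta a Q u) \<le> M * norm u powr (-A)"
proof
  fix q assume q: "q \<in> PP (lgx c0) n"
  obtain C where C: "C \<ge> 0" "\<forall>u\<in>S0. norm u \<ge> 1 \<longrightarrow> norm (q u) \<le> C * norm u powr (real_of_int n + 1/2)"
    using PP_bound[OF q] by blast
  have "(\<lambda>u. 0) \<in> Pspace (lgx c0)" using PP_zero PP_Pspace by blast
  moreover have "norm (q u - Delta a (\<lambda>u. 0) u) \<le> C * norm u powr (-A)" if "Re u < 0" "R \<le> norm u" for u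
  proof -
    have "norm (q u) \<le> C * norm u powr (real_of_int n + 1/2)" using C(2) S0_half that assms(2) by auto
    also have "\<dots> \<le> C * norm u powr (-A)" using that assms C(1) by (intro mult_left_mono powr_mono) auto
    finally show ?thesis by (simp add: Delta_def)
  qed
  ultimately show "\<exists>Q\<in>Pspace (lgx c0). \<exists>M. \<forall>u. Re u < 0 \<longrightarrow> R \<le> norm u \<longrightarrow>
           norm (q u - Delta a Q u) \<le> M * norm u powr (-A)" by blast
qed

lemma sum_split2:
  fixes K :: nat
  assumes "K \<ge> 2"
  shows "(\<Sum>k<K. f k) = f 0 + f 1 + (\<Sum>k=2..<K. f k)"
proof -
  have "(\<Sum>k<K. f k) = (\<Sum>k=0..<K. f k)" by (simp add: atLeast0LessThan)
  also have "\<dots> = f 0 + (\<Sum>k=1..<K. f k)" using assms by (subst sum.atLeast_Suc_lessThan) auto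
  also have "(\<Sum>k=1..<K. f k) = f 1 + (\<Sum>k=Suc 1..<K. f k)" using assms by (subst sum.atLeast_Suc_lessThan) auto
  finally show ?thesis by (simp add: numeral_2_eq_2 add.assoc)
qed



lemma inv_core:
  fixes a A R :: real
  assumes a: "a \<noteq> 0" and R: "R \<ge> 2" "R \<ge> 4 * \<bar>a\<bar> * pi"
    and IH: "\<forall>q\<in>PP (lgx c0) (n-1). \<exists>Q\<in>Pspace (lgx c0). \<exists>M. \<forall>u. Re u < 0 \<longrightarrow> R \<le> norm u \<longrightarrow>
           norm (q u - Delta a Q u) \<le> M * norm u powr (-A)"
  shows "\<forall>q\<in>PP (lgx c0) n. \<exists>Q\<in>Pspace (lgx c0). \<exists>M. \<forall>u. Re u < 0 \<longrightarrow> R \<le> norm u \<longrightarrow>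
           norm (q u - Delta a Q u) \<le> M * norm u powr (-A)"
proof
  fix q assume q: "q \<in> PP (lgx c0) n"
  define c where "c = \<i> * complex_of_real (a * pi)"
  have cnz: "c \<noteq> 0" using a by (simp add: c_def)
  have nc: "norm c = \<bar>a\<bar> * pi" by (simp add: c_def norm_mult abs_mult)
  have Dl: "Delta a F u = F (u + c) - F (u - c)" for F u by (simp add: Delta_def c_def)
  obtain Q0 where Q0: "Q0 \<in> PP (lgx c0) (n+1)" "\<forall>u\<in>S0. (Q0 has_field_derivative (1/(2*c)) * q u) (at u)"
    using PP_anti[OF PP_scale[OF q, of "1/(2*c)"]] by auto
  have "\<forall>k. \<exists>G. G \<in> PP (lgx c0) (n+1 - int k) \<and> (\<forall>u\<in>S0. (deriv^^k) Q0 u = G u)"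
    using PP_higher[OF Q0(1)] by blast
  then obtain G where G: "\<And>k. G k \<in> PP (lgx c0) (n+1-int k)" "\<And>k u. u \<in> S0 \<Longrightarrow> (deriv^^k) Q0 u = G k u"
    by metis
  define e where "e = real_of_int (n+1) + 1/2"
  obtain C0 where C0: "C0 \<ge> 0" "\<forall>u\<in>S0. norm u \<ge> 1 \<longrightarrow> norm (Q0 u) \<le> C0 * norm u powr e"
    using PP_bound[OF Q0(1)] unfolding e_def by blast
  define K where "K = nat \<lceil>e + A\<rceil> + 2"
  have K2: "K \<ge> 2" by (simp add: K_def)
  have KA: "e - real K \<le> -A"
  proof -
    have "e + A \<le> real (nat \<lceil>e + A\<rceil>)" by linarith
    then show ?thesis by (simp add: K_def)
  qed
  define s where "s u = (\<Sum>k=2..<K. (((-c)^k - c^k) / fact k) * G k u)" for u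
  have s: "s \<in> PP (lgx c0) (n-1)" unfolding s_def
  proof (rule PP_sum, simp, rule PP_scale)
    fix k assume "k \<in> {2..<K}"
    then have "n + 1 - int k \<le> n - 1" by auto
    then show "G k \<in> PP (lgx c0) (n-1)" using PP_mono G(1) by blast
  qed
  obtain Q1 M1 where Q1: "Q1 \<in> Pspace (lgx c0)"
    "\<forall>u. Re u < 0 \<longrightarrow> R \<le> norm u \<longrightarrow> norm (s u - Delta a Q1 u) \<le> M1 * norm u powr (-A)"
    using IH s by blast
  define M2 where "M2 = 4 * C0 * 2 powr \<bar>e\<bar> * (2 * norm c) ^ K"
  show "\<exists>Q\<in>Pspace (lgx c0). \<exists>M. \<forall>u. Re u < 0 \<longrightarrow> R \<le> norm u \<longrightarrow>
           norm (q u - Delta a Q u) \<le> M * norm u powr (-A)"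
  proof (intro bexI[of _ "\<lambda>u. Q0 u + Q1 u"] exI[of _ "M1 + M2"] allI impI)
    show "(\<lambda>u. Q0 u + Q1 u) \<in> Pspace (lgx c0)" by (rule Pspace_add[OF PP_Pspace[OF Q0(1)] Q1(1)])
    fix u assume u: "Re u < 0" "R \<le> norm u"
    have un: "u \<noteq> 0" using u by auto
    have uS: "u \<in> S0" using S0_half u by auto
    have nu: "norm u \<ge> 2" and nu4: "4 * norm c \<le> norm u" using u R nc by auto
    define r where "r = norm u / 2"
    have ballS: "ball u (norm u) \<subseteq> S0" using ball_S0[of u] u un by auto
    have holo: "Q0 holomorphic_on ball u (norm u)"
      using PP_holo[OF Q0(1)] ballS holomorphic_on_subset by blast
    have r: "0 < r" "r < norm u" using nu by (auto simp: r_def)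
    define B where "B = C0 * (2 powr \<bar>e\<bar> * norm u powr e)"
    have Bd: "norm (Q0 w) \<le> B" if w: "norm (w - u) = r" for w
    proof -
      have "w \<in> ball u (norm u)" using w r by (auto simp: dist_norm norm_minus_commute)
      then have wS: "w \<in> S0" using ballS by auto
      have "norm u - norm (w - u) \<le> norm w" using norm_triangle_ineq2[of u "u - w"]
        by (simp add: norm_minus_commute)
      then have w1: "norm u / 2 \<le> norm w" using w by (simp add: r_def)
      have "norm w \<le> norm u + norm (w - u)" using norm_triangle_ineq[of u "w - u"] by simp
      then have w2: "norm w \<le> 2 * norm u" using w nu by (simp add: r_def)
      have "norm w \<ge> 1" using w1 nu by auto
      then have "norm (Q0 w) \<le> C0 * norm w powr e" using C0 wS by auto
      also have "\<dots> \<le> B" unfolding B_def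
        by (intro mult_left_mono ratio_powr w1 w2) (use nu C0 in auto)
      finally show ?thesis .
    qed
    define T where "T x = (\<Sum>k<K. (deriv^^k) Q0 u / fact k * (x - u)^k)" for x
    have tp: "norm (Q0 (u + c) - T (u + c)) \<le> 2 * B * (norm c / r)^K"
      using taylor_rem[OF holo r Bd, of "u + c" K] nu4 unfolding T_def r_def by auto
    have tm: "norm (Q0 (u - c) - T (u - c)) \<le> 2 * B * (norm c / r)^K"
      using taylor_rem[OF holo r Bd, of "u - c" K] nu4 unfolding T_def r_def by auto
    have Tdiff: "T (u + c) - T (u - c) = q u - s u"
    proof -
      define f where "f k = (deriv^^k) Q0 u / fact k * (c^k - (-c)^k)" for k
      have "T (u+c) - T (u-c) = (\<Sum>k<K. f k)"
        unfolding T_def f_def by (simp add: sum_subtractf[symmetric] right_diff_distrib)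
      also have "\<dots> = f 0 + f 1 + (\<Sum>k=2..<K. f k)" by (rule sum_split2[OF K2])
      also have "f 0 = 0" by (simp add: f_def)
      also have "f 1 = q u"
      proof -
        have "(Q0 has_field_derivative (1/(2*c)) * q u) (at u)" using Q0(2) uS by blast
        then have "deriv Q0 u = (1/(2*c)) * q u" by (rule DERIV_imp_deriv)
        then have "(deriv ^^ 1) Q0 u = (1/(2*c)) * q u" by simp
        then show ?thesis using cnz by (simp add: f_def field_simps)
      qed
      also have "(\<Sum>k=2..<K. f k) = - s u"
        unfolding s_def f_def sum_negf[symmetric] by (rule sum.cong) (auto simp: G(2)[OF uS] field_simps)
      finally show ?thesis by simp
    qed
    have "q u - Delta a (\<lambda>u. Q0 u + Q1 u) u
        = (s u - Delta a Q1 u) + ((T (u + c) - Q0 (u + c)) - (T (u - c) - Q0 (u - c)))"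
      using Tdiff unfolding Dl by (simp add: algebra_simps)
    then have "norm (q u - Delta a (\<lambda>u. Q0 u + Q1 u) u)
       \<le> norm (s u - Delta a Q1 u) + (norm (Q0 (u + c) - T (u + c)) + norm (Q0 (u - c) - T (u - c)))"
      by (smt (verit) norm_minus_commute norm_triangle_ineq4 norm_triangle_ineq)
    also have "\<dots> \<le> M1 * norm u powr (-A) + 4 * B * (norm c / r)^K"
      using Q1(2) u tp tm by force
    also have "4 * B * (norm c / r)^K = M2 * norm u powr (e - real K)"
    proof -
      have "(norm c / r)^K = (2 * norm c)^K / norm u powr real K"
      proof -
        have "norm u powr real K = norm u ^ K" using nu powr_realpow[of "norm u" K] by linarith
        then show ?thesis using nu by (simp add: r_def power_divide field_simps)
      qed
      moreover have "norm u powr e / norm u powr real K = norm u powr (e - real K)"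
        by (simp add: powr_diff)
      moreover have "4 * B * ((2 * norm c)^K / norm u powr real K) = M2 * (norm u powr e / norm u powr real K)"
        unfolding B_def M2_def by (simp add: mult_ac)
      ultimately show ?thesis by simp
    qed
    also have "M2 * norm u powr (e - real K) \<le> M2 * norm u powr (-A)"
      using KA nu C0 by (intro mult_left_mono powr_mono) (auto simp: M2_def)
    finally show "norm (q u - Delta a (\<lambda>u. Q0 u + Q1 u) u) \<le> (M1 + M2) * norm u powr (-A)"
      by (simp add: algebra_simps)
  qed
qed



lemma inv_step:
  fixes a A R :: real
  assumes a: "a \<noteq> 0" and R: "R \<ge> 2" "R \<ge> 4 * \<bar>a\<bar> * pi"
  shows "\<forall>q\<in>PP (lgx c0) n. \<exists>Q\<in>Pspace (lgx c0). \<exists>M. \<forall>u. Re u < 0 \<longrightarrow> R \<le> norm u \<longrightarrow>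
           norm (q u - Delta a Q u) \<le> M * norm u powr (-A)"
proof -
  define n0 where "n0 = - \<lceil>A\<rceil> - 1"
  have main: "\<forall>n. n \<le> n0 + int k \<longrightarrow> (\<forall>q\<in>PP (lgx c0) n. \<exists>Q\<in>Pspace (lgx c0). \<exists>M. \<forall>u. Re u < 0 \<longrightarrow> R \<le> norm u \<longrightarrow>
           norm (q u - Delta a Q u) \<le> M * norm u powr (-A))" for k
  proof (induction k)
    case 0
    show ?case
    proof (intro allI impI)
      fix n assume "n \<le> n0 + int 0"
      then have "real_of_int n + 1/2 \<le> - A" unfolding n0_def by linarith
      then show "\<forall>q\<in>PP (lgx c0) n. \<exists>Q\<in>Pspace (lgx c0). \<exists>M. \<forall>u. Re u < 0 \<longrightarrow> R \<le> norm u \<longrightarrow>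
           norm (q u - Delta a Q u) \<le> M * norm u powr (-A)"
        using inv_base[of n A R c0 a] R by auto
    qed
  next
    case (Suc k)
    show ?case
    proof (intro allI impI)
      fix n assume "n \<le> n0 + int (Suc k)"
      then have "n - 1 \<le> n0 + int k" by simp
      then show "\<forall>q\<in>PP (lgx c0) n. \<exists>Q\<in>Pspace (lgx c0). \<exists>M. \<forall>u. Re u < 0 \<longrightarrow> R \<le> norm u \<longrightarrow>
           norm (q u - Delta a Q u) \<le> M * norm u powr (-A)"
        using inv_core[OF a R] Suc.IH by blast
    qed
  qed
  have "n \<le> n0 + int (nat (n - n0))" by simp
  then show ?thesis using main[of "nat (n - n0)"] by blast
qed

definition Rl :: "real list \<Rightarrow> real" where "Rl as = 2 + (\<Sum>a\<leftarrow>as. 4 * \<bar>a\<bar> * pi)"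

lemma Rl_ge: "Rl as \<ge> 2"
  unfolding Rl_def by (induction as) auto

lemma Rl_Cons: "Rl (a # as) = Rl as + 4 * \<bar>a\<bar> * pi"
  unfolding Rl_def by simp

lemma inv_list:
  assumes "\<forall>a\<in>set as. a \<noteq> 0" "R \<ge> Rl as"
  shows "\<forall>q\<in>Pspace (lgx c0). \<exists>Q\<in>Pspace (lgx c0). \<exists>M. \<forall>u. Re u < 0 \<longrightarrow> R \<le> norm u \<longrightarrow>
           norm (q u - Delta_list as Q u) \<le> M * norm u powr (-A)"
  using assms
proof (induction as arbitrary: R A)
  case Nil
  then show ?case by (auto intro!: exI[of _ 0])
next
  case (Cons a as)
  show ?case
  proof
    fix q assume q: "q \<in> Pspace (lgx c0)"
    define A' where "A' = max A 0"
    have a: "a \<noteq> 0" using Cons.prems by auto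
    have R2: "R \<ge> 2" using Cons.prems(2) Rl_ge[of "a#as"] by linarith
    have Ra: "R \<ge> 4 * \<bar>a\<bar> * pi" using Cons.prems(2) Rl_ge[of as] Rl_Cons[of a as] by linarith
    obtain n where "q \<in> PP (lgx c0) n" using q Pspace_iff by blast
    then obtain Q1 M1 where Q1: "Q1 \<in> Pspace (lgx c0)"
      "\<forall>u. Re u < 0 \<longrightarrow> R \<le> norm u \<longrightarrow> norm (q u - Delta a Q1 u) \<le> M1 * norm u powr (-A')"
      using inv_step[OF a R2 Ra, of c0 n A'] by blast
    define R' where "R' = R - 4 * \<bar>a\<bar> * pi"
    have R': "R' \<ge> Rl as" using Cons.prems(2) Rl_Cons[of a as] by (simp add: R'_def)
    obtain Q2 M2 where Q2: "Q2 \<in> Pspace (lgx c0)"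
      "\<forall>v. Re v < 0 \<longrightarrow> R' \<le> norm v \<longrightarrow> norm (Q1 v - Delta_list as Q2 v) \<le> M2 * norm v powr (-A')"
      using Cons.IH[of R' A'] Cons.prems(1) R' Q1(1) by auto
    define c where "c = \<i> * complex_of_real (a * pi)"
    have nc: "norm c = \<bar>a\<bar> * pi" by (simp add: c_def norm_mult abs_mult)
    have Dl: "Delta a F u = F (u + c) - F (u - c)" for F u by (simp add: Delta_def c_def)
    define M where "M = \<bar>M1\<bar> + 2 * \<bar>M2\<bar> * (3/4) powr (-A')"
    show "\<exists>Q\<in>Pspace (lgx c0). \<exists>M. \<forall>u. Re u < 0 \<longrightarrow> R \<le> norm u \<longrightarrow>
           norm (q u - Delta_list (a # as) Q u) \<le> M * norm u powr (-A)"
    proof (intro bexI[OF _ Q2(1)] exI[of _ M] allI impI)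
      fix u assume u: "Re u < 0" "R \<le> norm u"
      have nu1: "norm u \<ge> 1" using u R2 by auto
      have cu: "norm c \<le> norm u / 4" using u Ra nc by auto
      have pt: "norm (Q1 v - Delta_list as Q2 v) \<le> \<bar>M2\<bar> * (3/4) powr (-A') * norm u powr (-A')"
        if v: "v = u + c \<or> v = u - c" for v
      proof -
        have Rev: "Re v < 0" using v u by (auto simp: c_def)
        have "norm v \<ge> norm u - norm c" using v norm_triangle_ineq2[of u "-c"] norm_triangle_ineq2[of u c]
          by (auto simp: norm_minus_commute)
        then have nv: "norm v \<ge> 3/4 * norm u" using cu by linarith
        have "norm c \<le> 4 * \<bar>a\<bar> * pi" using nc pi_gt_zero by simp
        then have "R' \<le> norm v" using \<open>norm v \<ge> norm u - norm c\<close> u unfolding R'_def by linarith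
        then have "norm (Q1 v - Delta_list as Q2 v) \<le> M2 * norm v powr (-A')" using Q2(2) Rev by blast
        also have "\<dots> \<le> \<bar>M2\<bar> * norm v powr (-A')" by (intro mult_right_mono) auto
        also have "norm v powr (-A') \<le> (3/4 * norm u) powr (-A')"
          using nv nu1 by (intro powr_mono2') (auto simp: A'_def)
        also have "\<dots> = (3/4) powr (-A') * norm u powr (-A')" using nu1 powr_mult[of "3/4" "norm u" "-A'"] by simp
        finally show ?thesis by (simp add: mult_left_mono mult.assoc)
      qed
      have "q u - Delta_list (a # as) Q2 u = (q u - Delta a Q1 u) + (Q1 (u + c) - Delta_list as Q2 (u + c)) - (Q1 (u - c) - Delta_list as Q2 (u - c))"
        by (simp add: Dl)
      then have "norm (q u - Delta_list (a # as) Q2 u) \<le> norm (q u - Delta a Q1 u) + norm (Q1 (u + c) - Delta_list as Q2 (u + c)) + norm (Q1 (u - c) - Delta_list as Q2 (u - c))"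
      proof -
        have "norm (X + Y - Z) \<le> norm X + norm Y + norm Z" for X Y Z :: complex
          using norm_triangle_ineq4[of "X+Y" Z] norm_triangle_ineq[of X Y] by linarith
        then show ?thesis using \<open>q u - Delta_list (a # as) Q2 u = _\<close> by presburger
      qed
      also have "\<dots> \<le> \<bar>M1\<bar> * norm u powr (-A') + \<bar>M2\<bar> * (3/4) powr (-A') * norm u powr (-A') + \<bar>M2\<bar> * (3/4) powr (-A') * norm u powr (-A')"
      proof (intro add_mono pt)
        have "norm (q u - Delta a Q1 u) \<le> M1 * norm u powr (-A')" using Q1(2) u by blast
        also have "\<dots> \<le> \<bar>M1\<bar> * norm u powr (-A')" by (intro mult_right_mono) auto
        finally show "norm (q u - Delta a Q1 u) \<le> \<bar>M1\<bar> * norm u powr (-A')" .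
      qed auto
      also have "\<dots> = M * norm u powr (-A')" by (simp add: M_def algebra_simps)
      also have "\<dots> \<le> M * norm u powr (-A)"
      proof (rule mult_left_mono)
        show "norm u powr (-A') \<le> norm u powr (-A)" using nu1 by (intro powr_mono) (auto simp: A'_def)
        show "0 \<le> M" unfolding M_def by simp
      qed
      finally show "norm (q u - Delta_list (a # as) Q2 u) \<le> M * norm u powr (-A)" .
    qed
  qed
qed



lemma sep_holo1:
  assumes g_holo: "holomorphic2_on g U" and U: "\<And>z. norm z < r \<Longrightarrow> (z, w) \<in> U"
  shows "(\<lambda>z. g (z, w)) holomorphic_on ball 0 r"
proof -
  have "\<exists>f'. ((\<lambda>z. g (z, w)) has_field_derivative f') (at z)" if z: "z \<in> ball 0 r" for z
  proof -
    have "(z, w) \<in> U" using U z by auto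
    then obtain D where D: "(g has_derivative D) (at (z, w))"
      "\<forall>(c::complex) v. D (c * fst v, c * snd v) = c * D v"
      using g_holo unfolding holomorphic2_on_def by blast
    have p: "((\<lambda>z. (z, w)) has_derivative (\<lambda>h. (h, 0))) (at z)"
      by (auto intro!: derivative_eq_intros)
    have "((\<lambda>z. g (z, w)) has_derivative (\<lambda>h. D (h, 0))) (at z)"
      using has_derivative_compose[OF p, of g D] D(1) by simp
    moreover have "(\<lambda>h. D (h, 0)) = (\<lambda>h. D (1, 0) * h)"
    proof
      fix h :: complex
      show "D (h, 0) = D (1, 0) * h" using D(2)[rule_format, of h "(1, 0)"] by (simp add: mult.commute)
    qed
    ultimately show ?thesis unfolding has_field_derivative_def by (metis mult.commute)
  qed
  then show ?thesis by (simp add: holomorphic_on_open)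
qed

lemma sep_holo2:
  assumes g_holo: "holomorphic2_on g U" and U: "\<And>w. norm w < r \<Longrightarrow> (z, w) \<in> U"
  shows "(\<lambda>w. g (z, w)) holomorphic_on ball 0 r"
proof -
  have "\<exists>f'. ((\<lambda>w. g (z, w)) has_field_derivative f') (at w)" if w: "w \<in> ball 0 r" for w
  proof -
    have "(z, w) \<in> U" using U w by auto
    then obtain D where D: "(g has_derivative D) (at (z, w))"
      "\<forall>(c::complex) v. D (c * fst v, c * snd v) = c * D v"
      using g_holo unfolding holomorphic2_on_def by blast
    have p: "((\<lambda>w. (z, w)) has_derivative (\<lambda>h. (0, h))) (at w)"
      by (auto intro!: derivative_eq_intros)
    have "((\<lambda>w. g (z, w)) has_derivative (\<lambda>h. D (0, h))) (at w)"
      using has_derivative_compose[OF p, of g D] D(1) by simp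
    moreover have "(\<lambda>h. D (0, h)) = (\<lambda>h. D (0, 1) * h)"
    proof
      fix h :: complex
      show "D (0, h) = D (0, 1) * h" using D(2)[rule_format, of h "(0, 1)"] by (simp add: mult.commute)
    qed
    ultimately show ?thesis unfolding has_field_derivative_def by (metis mult.commute)
  qed
  then show ?thesis by (simp add: holomorphic_on_open)
qed

lemma g_cont:
  assumes "holomorphic2_on g U"
  shows "continuous_on U g"
proof (rule continuous_at_imp_continuous_on, rule ballI)
  fix z assume "z \<in> U"
  then obtain D where "(g has_derivative D) (at z)" using assms unfolding holomorphic2_on_def by blast
  then show "isCont g z" by (rule has_derivative_continuous)
qed



lemma param_cont:
  fixes h :: "complex \<Rightarrow> complex \<Rightarrow> complex"
  assumes rho: "\<rho> > 0" and cont: "continuous_on (sphere 0 \<rho> \<times> W) (\<lambda>p. h (fst p) (snd p))"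
  shows "continuous_on W (\<lambda>w. contour_integral (circlepath 0 \<rho>) (\<lambda>z. h z w))"
proof -
  let ?g = "circlepath 0 \<rho>"
  define v where "v t = 2 * pi * \<i> * \<rho> * exp (2 * of_real pi * \<i> * t)" for t :: real
  have eq: "contour_integral ?g (\<lambda>z. h z w) = integral (cbox 0 1) (\<lambda>t. h (?g t) w * v t)" for w
    unfolding contour_integral_integral cbox_interval v_def vector_derivative_circlepath by simp
  have c1: "continuous_on (W \<times> cbox 0 1) (\<lambda>p. (?g (snd p), fst p))"
  proof (intro continuous_on_Pair continuous_on_fst)
    have "continuous_on {0..1} ?g" using path_circlepath unfolding path_def by blast
    then show "continuous_on (W \<times> cbox 0 1) (\<lambda>p. ?g (snd p))"
      unfolding cbox_interval
      by (rule continuous_on_compose2[OF _ continuous_on_snd]) auto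
  qed (rule continuous_on_id)
  have img: "(\<lambda>p. (?g (snd p), fst p)) ` (W \<times> cbox 0 1) \<subseteq> sphere 0 \<rho> \<times> W"
  proof
    fix x assume "x \<in> (\<lambda>p. (?g (snd p), fst p)) ` (W \<times> cbox 0 1)"
    then obtain w t where x: "x = (?g t, w)" "w \<in> W" "t \<in> {0..1}" unfolding cbox_interval by auto
    have "?g t \<in> path_image ?g" using x(3) unfolding path_image_def by auto
    then show "x \<in> sphere 0 \<rho> \<times> W" using x rho by simp
  qed
  have c2: "continuous_on (W \<times> cbox 0 1) (\<lambda>p. h (?g (snd p)) (fst p))"
    using continuous_on_compose2[OF cont c1 img] by simp
  have c3: "continuous_on (W \<times> cbox 0 1) (\<lambda>p. v (snd p))"
    unfolding v_def by (intro continuous_intros)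
  have "continuous_on (W \<times> cbox 0 1) (\<lambda>(w, t). h (?g t) w * v t)"
    using continuous_on_mult[OF c2 c3] by (simp add: case_prod_beta)
  from integral_continuous_on_param[OF this]
  show ?thesis unfolding eq .
qed



lemma two_var:
  assumes g_holo: "holomorphic2_on g U" and U_open: "open U" and U_0: "(0,0) \<in> U"
  shows "\<exists>\<rho>>0. cball 0 \<rho> \<times> cball 0 \<rho> \<subseteq> U \<and> (\<forall>N. \<exists>B c. \<forall>z1 z2. norm z1 \<le> \<rho>/2 \<longrightarrow> norm z2 \<le> \<rho>/2 \<longrightarrow>
        norm (g (z1,z2) - (\<Sum>i<N. \<Sum>j<N. c i j * z1^i * z2^j)) \<le> B * ((norm z1/\<rho>)^N + (norm z2/\<rho>)^N))"
proof -
  obtain \<epsilon> where \<epsilon>: "\<epsilon> > 0" "ball (0,0) \<epsilon> \<subseteq> U"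
    using U_open U_0 open_contains_ball by blast
  define \<rho> where "\<rho> = \<epsilon> / 3"
  have rho: "\<rho> > 0" "\<rho> < \<epsilon>/2" using \<epsilon> by (auto simp: \<rho>_def)
  have inU: "(z, w) \<in> U" if "norm z < \<epsilon>/2" "norm w < \<epsilon>/2" for z w
  proof -
    have "norm (z, w) < \<epsilon>" using norm_Pair_le[of z w] that by linarith
    then have "(z, w) \<in> ball (0,0) \<epsilon>" by (metis dist_0_norm mem_ball zero_prod_def)
    then show ?thesis using \<epsilon>(2) by blast
  qed
  define Kc where "Kc = cball (0::complex) \<rho> \<times> cball (0::complex) \<rho>"
  have KU: "Kc \<subseteq> U" unfolding Kc_def using inU rho by auto
  have holo1: "(\<lambda>z. g (z, w)) holomorphic_on ball 0 (\<epsilon>/2)" if "norm w \<le> \<rho>" for w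
    by (rule sep_holo1[OF g_holo]) (use that rho inU in auto)
  have holo2: "(\<lambda>w. g (z, w)) holomorphic_on ball 0 (\<epsilon>/2)" if "norm z \<le> \<rho>" for z
    by (rule sep_holo2[OF g_holo]) (use that rho inU in auto)
  have gK: "continuous_on Kc g" using continuous_on_subset[OF g_cont[OF g_holo] KU] .
  have "compact (g ` Kc)" unfolding Kc_def
    by (rule compact_continuous_image[OF gK[unfolded Kc_def]]) (intro compact_Times compact_cball)
  then have "bounded (g ` Kc)" by (rule compact_imp_bounded)
  then obtain B0 where B00: "B0 > 0" "\<forall>x\<in>g ` Kc. norm x \<le> B0" unfolding bounded_pos by blast
  then have B0: "B0 > 0" "\<forall>p\<in>Kc. norm (g p) \<le> B0" by auto
  have B0': "norm (g (z, w)) \<le> B0" if "norm z \<le> \<rho>" "norm w \<le> \<rho>" for z w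
    using B0(2) that by (auto simp: Kc_def)
  have cball_sub: "cball 0 \<rho> \<subseteq> ball (0::complex) (\<epsilon>/2)" using rho by auto
  define a where "a i w = (deriv ^^ i) (\<lambda>z. g (z, w)) 0 / fact i" for i w
  have acont: "continuous_on (sphere 0 \<rho>) (a i)" for i
  proof -
    have eqa: "a i w = 1 / (2 * pi * \<i>) * contour_integral (circlepath 0 \<rho>) (\<lambda>z. g (z, w) / z ^ Suc i)"
      if "w \<in> sphere 0 \<rho>" for w
    proof -
      have hw: "(\<lambda>z. g (z, w)) holomorphic_on ball 0 (\<epsilon>/2)" using holo1 that by auto
      have "(deriv ^^ i) (\<lambda>z. g (z, w)) 0 = fact i / (2 * pi * \<i>) *
          contour_integral (circlepath 0 \<rho>) (\<lambda>z. g (z, w) / (z - 0) ^ Suc i)"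
      proof (rule Cauchy_higher_derivative_integral_circlepath(2))
        show "continuous_on (cball 0 \<rho>) (\<lambda>z. g (z, w))"
          by (rule continuous_on_subset[OF holomorphic_on_imp_continuous_on[OF hw] cball_sub])
        show "(\<lambda>z. g (z, w)) holomorphic_on ball 0 \<rho>"
          by (rule holomorphic_on_subset[OF hw]) (use ball_subset_cball cball_sub in blast)
      qed (use rho in simp)
      then show ?thesis unfolding a_def by simp
    qed
    have c: "continuous_on (sphere 0 \<rho> \<times> sphere 0 \<rho>) (\<lambda>p. g (fst p, snd p) / fst p ^ Suc i)"
    proof (intro continuous_intros)
      have "sphere 0 \<rho> \<times> sphere 0 \<rho> \<subseteq> Kc" unfolding Kc_def by auto
      then show "continuous_on (sphere 0 \<rho> \<times> sphere 0 \<rho>) (\<lambda>p. g (fst p, snd p))"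
        using continuous_on_subset[OF gK] by simp
    qed (use rho in auto)
    have "continuous_on (sphere 0 \<rho>) (\<lambda>w. 1 / (2 * pi * \<i>) * contour_integral (circlepath 0 \<rho>) (\<lambda>z. g (z, w) / z ^ Suc i))"
    proof -
      have "continuous_on (sphere 0 \<rho>) (\<lambda>w. contour_integral (circlepath 0 \<rho>) (\<lambda>z. g (z, w) / z ^ Suc i))"
        by (rule param_cont[OF rho(1)]) (use c in simp)
      then show ?thesis by (intro continuous_on_mult continuous_on_const)
    qed
    then show ?thesis by (rule continuous_on_eq) (simp add: eqa)
  qed
  have "\<exists>B c. \<forall>z1 z2. norm z1 \<le> \<rho>/2 \<longrightarrow> norm z2 \<le> \<rho>/2 \<longrightarrow>
        norm (g (z1,z2) - (\<Sum>i<N. \<Sum>j<N. c i j * z1^i * z2^j)) \<le> B * ((norm z1/\<rho>)^N + (norm z2/\<rho>)^N)" for N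
  proof -
    define c where "c i j = 1 / (2 * pi * \<i>) * contour_integral (circlepath 0 \<rho>) (\<lambda>w. a i w / w ^ Suc j)" for i j
    have cint: "((\<lambda>w. a i w / w ^ Suc j) has_contour_integral (2 * pi * \<i> * c i j)) (circlepath 0 \<rho>)" for i j
    proof -
      have "continuous_on (sphere 0 \<rho>) (\<lambda>w. a i w / w ^ Suc j)"
        by (intro continuous_intros acont) (use rho in auto)
      then have "(\<lambda>w. a i w / w ^ Suc j) contour_integrable_on (circlepath 0 \<rho>)"
        using rho by (intro contour_integrable_continuous_circlepath) auto
      then show ?thesis unfolding c_def by (simp add: has_contour_integral_integral)
    qed
    show ?thesis
    proof (intro exI[of _ "2 * B0 * (real N + 1)"] exI[of _ c] allI impI)
      fix z1 z2 :: complex assume z1: "norm z1 \<le> \<rho>/2" and z2: "norm z2 \<le> \<rho>/2"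
      define q1 where "q1 = norm z1 / \<rho>"
      define q2 where "q2 = norm z2 / \<rho>"
      have q: "0 \<le> q1" "q1 \<le> 1" "0 \<le> q2" "q2 \<le> 1" using z1 z2 rho by (auto simp: q1_def q2_def)
      have z1r: "norm z1 \<le> \<rho>" and z2r: "norm z2 \<le> \<rho>" using z1 z2 rho by auto
      define b where "b j = (deriv ^^ j) (\<lambda>w. g (z1, w)) 0 / fact j" for j
      have stepA: "norm (g (z1, z2) - (\<Sum>j<N. b j * z2 ^ j)) \<le> 2 * B0 * q2 ^ N"
        using taylor_rem[OF holo2[OF z1r] rho(1) rho(2), of B0 z2 N] B0' z1r z2
        unfolding b_def q2_def by auto
      have stepB: "norm (b j - (\<Sum>i<N. c i j * z1 ^ i)) \<le> 2 * B0 * q1 ^ N / \<rho> ^ j" for j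
      proof -
        have hz: "(\<lambda>w. g (z1, w)) holomorphic_on ball 0 (\<epsilon>/2)" using holo2 z1r by auto
        have bint: "((\<lambda>w. g (z1, w) / w ^ Suc j) has_contour_integral (2 * pi * \<i> * b j)) (circlepath 0 \<rho>)"
        proof -
          have cc: "continuous_on (cball 0 \<rho>) (\<lambda>w. g (z1, w))"
            by (rule continuous_on_subset[OF holomorphic_on_imp_continuous_on[OF hz] cball_sub])
          have hh: "(\<lambda>w. g (z1, w)) holomorphic_on ball 0 \<rho>"
            by (rule holomorphic_on_subset[OF hz]) (use ball_subset_cball cball_sub in blast)
          have 0: "0 \<in> ball (0::complex) \<rho>" using rho by simp
          have i: "(\<lambda>w. g (z1, w) / (w - 0) ^ Suc j) contour_integrable_on circlepath 0 \<rho>"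
            and e: "(deriv ^^ j) (\<lambda>w. g (z1, w)) 0 = fact j / (2 * pi * \<i>) *
                contour_integral (circlepath 0 \<rho>) (\<lambda>w. g (z1, w) / (w - 0) ^ Suc j)"
            using Cauchy_higher_derivative_integral_circlepath[OF cc hh 0] by auto
          have "contour_integral (circlepath 0 \<rho>) (\<lambda>w. g (z1, w) / w ^ Suc j) = 2 * pi * \<i> * b j"
            using e unfolding b_def by simp
          then show ?thesis using has_contour_integral_integral[OF i] by simp
        qed
        have sint: "((\<lambda>w. \<Sum>i<N. z1 ^ i * (a i w / w ^ Suc j)) has_contour_integral
             (\<Sum>i<N. z1 ^ i * (2 * pi * \<i> * c i j))) (circlepath 0 \<rho>)"
          by (rule has_contour_integral_sum, simp, rule has_contour_integral_lmul, rule cint)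
        have dint: "((\<lambda>w. g (z1, w) / w ^ Suc j - (\<Sum>i<N. z1 ^ i * (a i w / w ^ Suc j))) has_contour_integral
             (2 * pi * \<i> * b j - (\<Sum>i<N. z1 ^ i * (2 * pi * \<i> * c i j)))) (circlepath 0 \<rho>)"
          by (rule has_contour_integral_diff[OF bint sint])
        have bnd: "norm (g (z1, w) / w ^ Suc j - (\<Sum>i<N. z1 ^ i * (a i w / w ^ Suc j))) \<le> 2 * B0 * q1 ^ N / \<rho> ^ Suc j"
          if w: "norm (w - 0) = \<rho>" for w
        proof -
          have wr: "norm w \<le> \<rho>" using w by simp
          have tr1: "norm (g (z1, w) - (\<Sum>i<N. a i w * z1 ^ i)) \<le> 2 * B0 * q1 ^ N"
            using taylor_rem[OF holo1[OF wr] rho(1) rho(2), of B0 z1 N] B0' wr z1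
            unfolding a_def q1_def by auto
          have "g (z1, w) / w ^ Suc j - (\<Sum>i<N. z1 ^ i * (a i w / w ^ Suc j))
              = (g (z1, w) - (\<Sum>i<N. a i w * z1 ^ i)) / w ^ Suc j"
            by (simp add: diff_divide_distrib sum_divide_distrib mult_ac)
          then have "norm (g (z1, w) / w ^ Suc j - (\<Sum>i<N. z1 ^ i * (a i w / w ^ Suc j)))
               = norm (g (z1, w) - (\<Sum>i<N. a i w * z1 ^ i)) / \<rho> ^ Suc j"
            using w by (simp only: norm_divide norm_power) simp
          also have "\<dots> \<le> 2 * B0 * q1 ^ N / \<rho> ^ Suc j"
            by (intro divide_right_mono tr1) (use rho in auto)
          finally show ?thesis .
        qed
        have "norm (2 * pi * \<i> * b j - (\<Sum>i<N. z1 ^ i * (2 * pi * \<i> * c i j))) \<le> 2 * B0 * q1 ^ N / \<rho> ^ Suc j * (2 * pi * \<rho>)"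
          by (rule has_contour_integral_bound_circlepath[OF dint _ rho(1) bnd]) (use B0 q rho in auto)
        moreover have "2 * pi * \<i> * b j - (\<Sum>i<N. z1 ^ i * (2 * pi * \<i> * c i j)) = (2 * pi * \<i>) * (b j - (\<Sum>i<N. c i j * z1 ^ i))"
          by (simp add: sum_distrib_left algebra_simps)
        moreover have "norm (2 * pi * \<i>) = 2 * pi" by (simp add: norm_mult)
        ultimately have "2 * pi * norm (b j - (\<Sum>i<N. c i j * z1 ^ i)) \<le> 2 * B0 * q1 ^ N / \<rho> ^ Suc j * (2 * pi * \<rho>)"
          by (simp add: norm_mult)
        moreover have "2 * B0 * q1 ^ N / \<rho> ^ Suc j * (2 * pi * \<rho>) = 2 * pi * (2 * B0 * q1 ^ N / \<rho> ^ j)"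
          using rho by (simp add: field_simps)
        ultimately have "2 * pi * norm (b j - (\<Sum>i<N. c i j * z1 ^ i)) \<le> 2 * pi * (2 * B0 * q1 ^ N / \<rho> ^ j)"
          by linarith
        then show ?thesis using pi_gt_zero by (subst (asm) mult_le_cancel_left_pos) auto
      qed
      have split: "g (z1,z2) - (\<Sum>i<N. \<Sum>j<N. c i j * z1^i * z2^j)
          = (g (z1, z2) - (\<Sum>j<N. b j * z2 ^ j)) + (\<Sum>j<N. (b j - (\<Sum>i<N. c i j * z1 ^ i)) * z2 ^ j)"
      proof -
        have "(\<Sum>i<N. \<Sum>j<N. c i j * z1^i * z2^j) = (\<Sum>j<N. \<Sum>i<N. c i j * z1^i * z2^j)"
          by (rule sum.swap)
        also have "\<dots> = (\<Sum>j<N. (\<Sum>i<N. c i j * z1 ^ i) * z2 ^ j)"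
          by (simp add: sum_distrib_right)
        finally show ?thesis by (simp add: sum_subtractf left_diff_distrib algebra_simps)
      qed
      have tj: "norm ((b j - (\<Sum>i<N. c i j * z1 ^ i)) * z2 ^ j) \<le> 2 * B0 * q1 ^ N" for j
      proof -
        have "norm ((b j - (\<Sum>i<N. c i j * z1 ^ i)) * z2 ^ j) \<le> 2 * B0 * q1 ^ N / \<rho> ^ j * norm z2 ^ j"
          unfolding norm_mult norm_power by (intro mult_right_mono stepB) auto
        also have "\<dots> = 2 * B0 * q1 ^ N * q2 ^ j" using rho by (simp add: q2_def power_divide)
        also have "\<dots> \<le> 2 * B0 * q1 ^ N * 1"
          using q B0 by (intro mult_left_mono power_le_one) auto
        finally show ?thesis by simp
      qed
      have "norm (g (z1,z2) - (\<Sum>i<N. \<Sum>j<N. c i j * z1^i * z2^j))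
          \<le> norm (g (z1, z2) - (\<Sum>j<N. b j * z2 ^ j)) + norm (\<Sum>j<N. (b j - (\<Sum>i<N. c i j * z1 ^ i)) * z2 ^ j)"
        unfolding split by (rule norm_triangle_ineq)
      also have "\<dots> \<le> 2 * B0 * q2 ^ N + (\<Sum>j<N. 2 * B0 * q1 ^ N)"
        by (intro add_mono stepA order_trans[OF norm_sum sum_mono] tj)
      also have "\<dots> = 2 * B0 * q2 ^ N + real N * (2 * B0 * q1 ^ N)" by simp
      also have "\<dots> \<le> 2 * B0 * (real N + 1) * (q1 ^ N + q2 ^ N)"
        using B0 q by (simp add: algebra_simps)
      finally show "norm (g (z1,z2) - (\<Sum>i<N. \<Sum>j<N. c i j * z1^i * z2^j))
          \<le> 2 * B0 * (real N + 1) * ((norm z1/\<rho>)^N + (norm z2/\<rho>)^N)"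
        unfolding q1_def q2_def .
    qed
  qed
  then show ?thesis using rho KU unfolding Kc_def by blast
qed



lemma lg_eq:
  assumes lg_cont: "continuous_on {u. Re u < 0} lg"
    and lg_branch: "\<forall>u. Re u < 0 \<longrightarrow> exp (lg u) = u"
  shows "\<forall>u. Re u < 0 \<longrightarrow> lg u = lgx (lg (-1)) u"
proof -
  define H where "H = {u::complex. Re u < 0}"
  have oH: "open H" unfolding H_def by (rule open_halfspace_Re_lt)
  have cH: "convex H" unfolding H_def by (rule convex_halfspace_Re_lt)
  have br: "\<And>z. z \<in> H \<Longrightarrow> exp (lg z) = z" using lg_branch unfolding H_def by blast
  have d: "((\<lambda>u. lg u - lgx 0 u) has_field_derivative 0) (at x within H)" if x: "x \<in> H" for x
  proof -
    have e: "exp (lg x) = x" using br x by blast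
    have xne: "exp (lg x) \<noteq> 0" by simp
    have "isCont lg x" using lg_cont oH x continuous_on_eq_continuous_at unfolding H_def by blast
    then have ct: "continuous (at x) lg" by simp
    have d1: "(lg has_field_derivative inverse (exp (lg x))) (at x)"
      by (rule has_field_derivative_inverse_basic[OF DERIV_exp xne ct oH x br])
    have xS: "x \<in> S0" using S0_half x unfolding H_def by blast
    have d2: "(lgx 0 has_field_derivative inverse x) (at x)"
      by (rule lgx_deriv[OF xS])
    have "((\<lambda>u. lg u - lgx 0 u) has_field_derivative inverse (exp (lg x)) - inverse x) (at x)"
      by (rule DERIV_diff[OF d1 d2])
    then have "((\<lambda>u. lg u - lgx 0 u) has_field_derivative 0) (at x)" unfolding e by simp
    then show ?thesis by (rule has_field_derivative_at_within)
  qed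
  obtain C where C: "\<forall>x\<in>H. lg x - lgx 0 x = C" using has_field_derivative_zero_constant[OF cH d] by blast
  have m1: "-1 \<in> H" by (simp add: H_def)
  have "lgx 0 (-1) = 0" by (simp add: lgx_def)
  then have CC: "C = lg (-1)" using C m1 by force
  show ?thesis
  proof (intro allI impI)
    fix u :: complex assume "Re u < 0"
    then have "lg u - lgx 0 u = lg (-1)" using C CC unfolding H_def by blast
    then show "lg u = lgx (lg (-1)) u" unfolding lgx_def by (simp add: algebra_simps)
  qed
qed

lemma Delta_list_cong:
  assumes "\<forall>v. Re v < 0 \<longrightarrow> F v = G v" "Re u < 0"
  shows "Delta_list as F u = Delta_list as G u"
  using assms(2)
proof (induction as arbitrary: u)
  case Nil then show ?case using assms(1) by simp
next
  case (Cons a as)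
  have "Re (u + \<i> * of_real (a * pi)) < 0" "Re (u - \<i> * of_real (a * pi)) < 0" using Cons.prems by auto
  then show ?case using Cons.IH by (simp add: Delta_def)
qed

lemma Pspace_transfer:
  assumes "p \<in> Pspace l"
  shows "\<exists>p'\<in>Pspace l'. \<forall>u. l u = l' u \<longrightarrow> p u = p' u"
proof -
  obtain n where "p \<in> PP l n" using assms Pspace_iff by blast
  then obtain p' where "p' \<in> PP l' n" "\<forall>u. l u = l' u \<longrightarrow> p u = p' u" using PP_transfer by blast
  then show ?thesis using PP_Pspace by blast
qed

lemma powi_split:
  assumes "(u::complex) \<noteq> 0"
  shows "u powi (int m - int i - int j) = u ^ m * (1 / u) ^ i * (1 / u) ^ j"
proof -
  have "u powi (int m - int i - int j) = u powi int m * u powi (- int i) * u powi (- int j)"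
    using assms power_int_add[of u "int m" "- int i"] power_int_add[of u "int m - int i" "- int j"] by simp
  also have "\<dots> = u ^ m * (1 / u) ^ i * (1 / u) ^ j"
    by (simp add: power_int_minus power_inverse divide_inverse)
  finally show ?thesis .
qed



lemma part1:
  fixes f g :: "complex \<times> complex \<Rightarrow> complex"
  assumes U_open: "open U" and U_0: "(0, 0) \<in> U"
    and g_holo: "holomorphic2_on g U"
    and f_mero: "\<forall>z\<in>U. fst z \<noteq> 0 \<longrightarrow> f z = g z / (fst z) ^ m"
    and lgeq: "\<forall>u. Re u < 0 \<longrightarrow> lg u = lgx c0 u"
  shows "\<exists>L1\<ge>1. (\<forall>u. Re u < -L1 \<longrightarrow> (1 / u, lg u / u) \<in> U) \<and>
     (\<forall>A::real. \<exists>p\<in>Pspace lg. \<exists>M. \<forall>u. Re u < -L1 \<longrightarrow>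
         cmod (f (1 / u, lg u / u) - p u) \<le> M * cmod u powr (-A))"
proof -
  obtain \<rho> where rho: "\<rho> > 0" and KU: "cball 0 \<rho> \<times> cball 0 \<rho> \<subseteq> U"
    and TE: "\<forall>N. \<exists>B c. \<forall>z1 z2. norm z1 \<le> \<rho>/2 \<longrightarrow> norm z2 \<le> \<rho>/2 \<longrightarrow>
        norm (g (z1,z2) - (\<Sum>i<N. \<Sum>j<N. c i j * z1^i * z2^j)) \<le> B * ((norm z1/\<rho>)^N + (norm z2/\<rho>)^N)"
    using two_var[OF g_holo U_open U_0] by blast
  define K0 where "K0 = pi + norm c0"
  have K0: "K0 \<ge> 0" unfolding K0_def using pi_gt_zero norm_ge_zero[of c0] by linarith
  obtain C1 where C1: "C1 \<ge> 0" "\<forall>x::real. x \<ge> 1 \<longrightarrow> (ln x + K0) ^ 1 \<le> C1 * x powr (1/2)"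
    using log_pow_bound[OF K0, of 1] by blast
  define C2 where "C2 = max 1 C1"
  have C2: "C2 \<ge> 1" "C1 \<le> C2" by (auto simp: C2_def)
  define L1 where "L1 = max 1 (max (2/\<rho>) ((2*C2/\<rho>)^2))"
  have L1: "L1 \<ge> 1" "L1 \<ge> 2/\<rho>" "L1 \<ge> (2*C2/\<rho>)^2" by (auto simp: L1_def)
  have est: "norm (1/u) \<le> C2 * norm u powr (-1/2) \<and> norm (lg u / u) \<le> C2 * norm u powr (-1/2)
       \<and> C2 * norm u powr (-1/2) \<le> \<rho>/2 \<and> norm u \<ge> 1" if u: "Re u < -L1" for u
  proof -
    define x where "x = norm u"
    have xL: "x > L1" using u abs_Re_le_cmod[of u] unfolding x_def by linarith
    then have x1: "x \<ge> 1" using L1 by linarith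
    have xpos: "x > 0" using x1 by linarith
    have sq: "x powr (-1/2) = 1 / sqrt x" using xpos by (simp add: powr_minus_divide powr_half_sqrt)
    have sqx: "sqrt x \<le> x"
    proof -
      have "x \<le> x * x" using mult_left_mono[of 1 x x] x1 by simp
      then have "sqrt x \<le> sqrt (x * x)" by (rule real_sqrt_le_mono)
      then show ?thesis using xpos by simp
    qed
    have sq1: "sqrt x \<ge> 1" using x1 by simp
    have a: "norm (1/u) \<le> C2 * x powr (-1/2)"
    proof -
      have "norm (1/u) = 1 / x" by (simp add: x_def norm_divide)
      also have "\<dots> \<le> 1 / sqrt x" using sqx sq1 by (intro divide_left_mono) auto
      also have "\<dots> \<le> C2 * (1 / sqrt x)" using mult_right_mono[OF C2(1), of "1 / sqrt x"] sq1 by simp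
      finally show ?thesis using sq by simp
    qed
    have b: "norm (lg u / u) \<le> C2 * x powr (-1/2)"
    proof -
      have uS: "u \<in> S0" using S0_half u L1 by auto
      have "norm (lg u) = norm (lgx c0 u)" using lgeq u L1 by auto
      also have "\<dots> \<le> \<bar>ln x\<bar> + pi + norm c0" using lgx_bound[OF uS] unfolding x_def .
      also have "\<dots> = ln x + K0" using x1 by (simp add: K0_def)
      also have "\<dots> \<le> C1 * x powr (1/2)" using C1(2) x1 by auto
      also have "\<dots> \<le> C2 * sqrt x" using C2 C1 xpos by (simp add: powr_half_sqrt mult_right_mono)
      finally have "norm (lg u) \<le> C2 * sqrt x" .
      then have "norm (lg u / u) \<le> C2 * sqrt x / x" by (simp add: norm_divide x_def divide_right_mono)
      also have "C2 * sqrt x / x = C2 * (1 / sqrt x)"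
        using xpos by (simp add: field_simps)
      finally show ?thesis using sq by simp
    qed
    have c: "C2 * x powr (-1/2) \<le> \<rho>/2"
    proof -
      have "sqrt x \<ge> sqrt ((2*C2/\<rho>)^2)" using L1 xL by (intro real_sqrt_le_mono) linarith
      then have "sqrt x \<ge> 2*C2/\<rho>" using C2 rho by simp
      then have "C2 / sqrt x \<le> \<rho>/2" using C2 rho sq1 by (simp add: field_simps)
      then show ?thesis using sq by simp
    qed
    show ?thesis using a b c x1 unfolding x_def by auto
  qed
  have inU: "(1 / u, lg u / u) \<in> cball 0 \<rho> \<times> cball 0 \<rho>" if "Re u < -L1" for u
    using est[OF that] rho by auto
  have approx: "\<exists>p\<in>Pspace lg. \<exists>M. \<forall>u. Re u < -L1 \<longrightarrow>
         cmod (f (1 / u, lg u / u) - p u) \<le> M * cmod u powr (-A)" for A :: real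
  proof -
    define N where "N = nat \<lceil>2 * (A + real m)\<rceil>"
    have NA: "real m - real N / 2 \<le> -A"
    proof -
      have "2 * (A + real m) \<le> real N" unfolding N_def by linarith
      then show ?thesis by (simp add: field_simps)
    qed
    obtain B c where BC: "\<forall>z1 z2. norm z1 \<le> \<rho>/2 \<longrightarrow> norm z2 \<le> \<rho>/2 \<longrightarrow>
        norm (g (z1,z2) - (\<Sum>i<N. \<Sum>j<N. c i j * z1^i * z2^j)) \<le> B * ((norm z1/\<rho>)^N + (norm z2/\<rho>)^N)"
      using TE by blast
    define p where "p u = (\<Sum>i<N. \<Sum>j<N. c i j * u powi (int m - int i - int j) * lg u ^ j)" for u
    have pP: "p \<in> PP lg (int m)" unfolding p_def
      by (intro PP_sum PP_mon) auto
    define M where "M = \<bar>B\<bar> * 2 * (C2/\<rho>)^N"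
    show ?thesis
    proof (intro bexI[of _ p] exI[of _ M] allI impI)
      show "p \<in> Pspace lg" using pP PP_Pspace by blast
      fix u assume u: "Re u < -L1"
      define x where "x = norm u"
      define z1 where "z1 = 1 / u"
      define z2 where "z2 = lg u / u"
      have e: "norm z1 \<le> C2 * x powr (-1/2)" "norm z2 \<le> C2 * x powr (-1/2)" "C2 * x powr (-1/2) \<le> \<rho>/2" "x \<ge> 1"
        using est[OF u] unfolding x_def z1_def z2_def by auto
      have un: "u \<noteq> 0" using e(4) unfolding x_def by auto
      have zU: "(z1, z2) \<in> U" using inU[OF u] KU unfolding z1_def z2_def by blast
      have fz: "f (z1, z2) = g (z1, z2) * u ^ m"
        using f_mero zU un unfolding z1_def by (simp add: power_one_over divide_inverse power_inverse)
      have pz: "p u = u ^ m * (\<Sum>i<N. \<Sum>j<N. c i j * z1^i * z2^j)"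
      proof -
        have tm: "c i j * u powi (int m - int i - int j) * lg u ^ j = u ^ m * (c i j * z1^i * z2^j)" for i j
          using powi_split[OF un, of m i j] unfolding z1_def z2_def by (simp add: power_divide field_simps)
        show ?thesis unfolding p_def sum_distrib_left by (intro sum.cong refl) (rule tm)
      qed
      have "f (1 / u, lg u / u) - p u = u ^ m * (g (z1, z2) - (\<Sum>i<N. \<Sum>j<N. c i j * z1^i * z2^j))"
        using fz pz unfolding z1_def z2_def by (simp add: algebra_simps)
      then have "norm (f (1 / u, lg u / u) - p u) = x ^ m * norm (g (z1, z2) - (\<Sum>i<N. \<Sum>j<N. c i j * z1^i * z2^j))"
        unfolding x_def by (simp add: norm_mult norm_power)
      also have "\<dots> \<le> x ^ m * (\<bar>B\<bar> * ((norm z1/\<rho>)^N + (norm z2/\<rho>)^N))"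
      proof (intro mult_left_mono)
        have "norm (g (z1, z2) - (\<Sum>i<N. \<Sum>j<N. c i j * z1^i * z2^j)) \<le> B * ((norm z1/\<rho>)^N + (norm z2/\<rho>)^N)"
          using BC e by force
        also have "\<dots> \<le> \<bar>B\<bar> * ((norm z1/\<rho>)^N + (norm z2/\<rho>)^N)"
          by (intro mult_right_mono) (use rho in auto)
        finally show "norm (g (z1, z2) - (\<Sum>i<N. \<Sum>j<N. c i j * z1^i * z2^j)) \<le> \<bar>B\<bar> * ((norm z1/\<rho>)^N + (norm z2/\<rho>)^N)" .
      qed (simp add: x_def)
      also have "\<dots> \<le> x ^ m * (\<bar>B\<bar> * (2 * (C2 * x powr (-1/2) / \<rho>)^N))"
      proof -
        have "(norm z1/\<rho>)^N \<le> (C2 * x powr (-1/2) / \<rho>)^N" "(norm z2/\<rho>)^N \<le> (C2 * x powr (-1/2) / \<rho>)^N"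
          using e rho by (auto intro!: power_mono divide_right_mono)
        then show ?thesis by (intro mult_left_mono) (auto simp: x_def)
      qed
      also have "\<dots> = M * (x ^ m * (x powr (-1/2)) ^ N)"
        unfolding M_def by (simp add: power_mult_distrib power_divide field_simps)
      also have "x ^ m * (x powr (-1/2)) ^ N = x powr (real m - real N / 2)"
      proof -
        have h1: "(x powr (-1/2))^N = x powr (real N * (-1/2))" by (rule powr_power) (use e(4) in simp)
        have h2: "x ^ m = x powr real m" using powr_realpow[of x m] e(4) by simp
        have "x ^ m * (x powr (-1/2)) ^ N = x powr (real m + real N * (-1/2))"
          unfolding h1 h2 by (rule powr_add[symmetric])
        also have "real m + real N * (-1/2) = real m - real N / 2" by simp
        finally show ?thesis .
      qed
      also have "M * x powr (real m - real N / 2) \<le> M * x powr (-A)"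
        using NA e(4) C2 rho by (intro mult_left_mono powr_mono) (auto simp: M_def)
      finally show "norm (f (1 / u, lg u / u) - p u) \<le> M * norm u powr (-A)" unfolding x_def .
    qed
  qed
  show ?thesis using L1(1) inU KU approx by blast
qed



theorem lemma13:
  fixes f g :: "complex \<times> complex \<Rightarrow> complex"
    and U :: "(complex \<times> complex) set"
    and m :: nat
    and lg :: "complex \<Rightarrow> complex"
    and as :: "real list"
  assumes U_open: "open U" and U_0: "(0, 0) \<in> U"
    and g_holo: "holomorphic2_on g U"
    and f_mero: "\<forall>z\<in>U. fst z \<noteq> 0 \<longrightarrow> f z = g z / (fst z) ^ m"
    and lg_cont: "continuous_on {u. Re u < 0} lg"
    and lg_branch: "\<forall>u. Re u < 0 \<longrightarrow> exp (lg u) = u"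
    and as_nz: "\<forall>a\<in>set as. a \<noteq> 0"
  shows "\<exists>L>0.
     (\<forall>u. Re u < -L \<longrightarrow> (1 / u, lg u / u) \<in> U) \<and>
     (\<forall>A::real. \<exists>p\<in>Pspace lg. \<exists>M. \<forall>u. Re u < -L \<longrightarrow>
         cmod (f (1 / u, lg u / u) - p u) \<le> M * cmod u powr (-A)) \<and>
     (\<forall>p\<in>Pspace lg. \<exists>P\<in>Pspace lg. \<forall>u. Re u < -L \<longrightarrow>
         (P has_field_derivative p u) (at u)) \<and>
     (\<forall>A::real. \<exists>Pf\<in>Pspace lg. \<exists>M. \<forall>u. Re u < -L \<longrightarrow>
         cmod (f (1 / u, lg u / u) - Delta_list as Pf u) \<le> M * cmod u powr (-A))"
proof -
  define c0 where "c0 = lg (-1)"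
  have lgeq: "\<forall>u. Re u < 0 \<longrightarrow> lg u = lgx c0 u"
    using lg_eq[OF lg_cont lg_branch] unfolding c0_def .
  obtain L1 where L1: "L1 \<ge> 1" "\<forall>u. Re u < -L1 \<longrightarrow> (1 / u, lg u / u) \<in> U"
    "\<forall>A::real. \<exists>p\<in>Pspace lg. \<exists>M. \<forall>u. Re u < -L1 \<longrightarrow>
         cmod (f (1 / u, lg u / u) - p u) \<le> M * cmod u powr (-A)"
    using part1[OF U_open U_0 g_holo f_mero lgeq] by blast
  define L where "L = max L1 (Rl as)"
  have LL1: "L \<ge> L1" and LR: "L \<ge> Rl as" by (auto simp: L_def)
  have Lpos: "L > 0" using LL1 L1(1) by linarith
  have oH: "open {u::complex. Re u < 0}" by (rule open_halfspace_Re_lt)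
  have p1: "\<forall>A::real. \<exists>p\<in>Pspace lg. \<exists>M. \<forall>u. Re u < -L \<longrightarrow>
         cmod (f (1 / u, lg u / u) - p u) \<le> M * cmod u powr (-A)"
  proof
    fix A :: real
    obtain p M where "p \<in> Pspace lg" "\<forall>u. Re u < -L1 \<longrightarrow> cmod (f (1 / u, lg u / u) - p u) \<le> M * cmod u powr (-A)"
      using L1(3) by blast
    then show "\<exists>p\<in>Pspace lg. \<exists>M. \<forall>u. Re u < -L \<longrightarrow>
         cmod (f (1 / u, lg u / u) - p u) \<le> M * cmod u powr (-A)"
      using LL1 by (intro bexI[of _ p] exI[of _ M]) auto
  qed
  have p2: "\<forall>p\<in>Pspace lg. \<exists>P\<in>Pspace lg. \<forall>u. Re u < -L \<longrightarrow> (P has_field_derivative p u) (at u)"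
  proof
    fix p assume "p \<in> Pspace lg"
    then obtain n where "p \<in> PP lg n" using Pspace_iff by blast
    then obtain p' where p': "p' \<in> PP (lgx c0) n" "\<forall>u. lg u = lgx c0 u \<longrightarrow> p u = p' u"
      using PP_transfer by blast
    obtain Q' where Q': "Q' \<in> PP (lgx c0) (n+1)" "\<forall>u\<in>S0. (Q' has_field_derivative p' u) (at u)"
      using PP_anti[OF p'(1)] by blast
    obtain Q where Q: "Q \<in> PP lg (n+1)" "\<forall>u. lgx c0 u = lg u \<longrightarrow> Q' u = Q u"
      using PP_transfer[OF Q'(1)] by blast
    have "(Q has_field_derivative p u) (at u)" if u: "Re u < -L" for u
    proof -
      have u0: "Re u < 0" using u Lpos by linarith
      have "(Q' has_field_derivative p' u) (at u)" using Q'(2) S0_half[OF u0] by blast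
      then have "(Q has_field_derivative p' u) (at u)"
        by (rule has_field_derivative_transform_within_open[OF _ oH]) (use u0 Q(2) lgeq in auto)
      moreover have "p u = p' u" using p'(2) lgeq u0 by blast
      ultimately show ?thesis by simp
    qed
    then show "\<exists>P\<in>Pspace lg. \<forall>u. Re u < -L \<longrightarrow> (P has_field_derivative p u) (at u)"
      using Q(1) PP_Pspace by blast
  qed
  have p3: "\<forall>A::real. \<exists>Pf\<in>Pspace lg. \<exists>M. \<forall>u. Re u < -L \<longrightarrow>
         cmod (f (1 / u, lg u / u) - Delta_list as Pf u) \<le> M * cmod u powr (-A)"
  proof
    fix A :: real
    obtain p M1 where p: "p \<in> Pspace lg" "\<forall>u. Re u < -L \<longrightarrow> cmod (f (1 / u, lg u / u) - p u) \<le> M1 * cmod u powr (-A)"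
      using p1 by blast
    obtain p' where p': "p' \<in> Pspace (lgx c0)" "\<forall>u. lg u = lgx c0 u \<longrightarrow> p u = p' u"
      using Pspace_transfer[OF p(1)] by blast
    obtain Q' M2 where Q': "Q' \<in> Pspace (lgx c0)"
      "\<forall>u. Re u < 0 \<longrightarrow> L \<le> norm u \<longrightarrow> norm (p' u - Delta_list as Q' u) \<le> M2 * norm u powr (-A)"
      using inv_list[OF as_nz LR, of c0 A] p'(1) by blast
    obtain Q where Q: "Q \<in> Pspace lg" "\<forall>u. lgx c0 u = lg u \<longrightarrow> Q' u = Q u"
      using Pspace_transfer[OF Q'(1)] by blast
    have "cmod (f (1 / u, lg u / u) - Delta_list as Q u) \<le> (M1 + M2) * cmod u powr (-A)" if u: "Re u < -L" for u
    proof -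
      have u0: "Re u < 0" using u Lpos by linarith
      have nu: "L \<le> norm u" using u abs_Re_le_cmod[of u] by linarith
      have "\<forall>v. Re v < 0 \<longrightarrow> Q v = Q' v" using Q(2) lgeq by auto
      then have dq: "Delta_list as Q u = Delta_list as Q' u" by (rule Delta_list_cong[OF _ u0])
      have pp: "p u = p' u" using p'(2) lgeq u0 by blast
      have "f (1 / u, lg u / u) - Delta_list as Q u = (f (1 / u, lg u / u) - p u) + (p' u - Delta_list as Q' u)"
        using dq pp by simp
      then have "cmod (f (1 / u, lg u / u) - Delta_list as Q u) \<le> cmod (f (1 / u, lg u / u) - p u) + cmod (p' u - Delta_list as Q' u)"
        by (metis norm_triangle_ineq)
      also have "\<dots> \<le> M1 * cmod u powr (-A) + M2 * cmod u powr (-A)"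
        using p(2) Q'(2) u u0 nu by (intro add_mono) auto
      finally show ?thesis by (simp add: algebra_simps)
    qed
    then show "\<exists>Pf\<in>Pspace lg. \<exists>M. \<forall>u. Re u < -L \<longrightarrow>
         cmod (f (1 / u, lg u / u) - Delta_list as Pf u) \<le> M * cmod u powr (-A)"
      using Q(1) by blast
  qed
  have reg: "\<forall>u. Re u < -L \<longrightarrow> (1 / u, lg u / u) \<in> U" using L1(2) LL1 by auto
  show ?thesis using Lpos reg p1 p2 p3 by blast
qed


end
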